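(* Let $\sigma>0$, $\rho_0\in(0,1)$ and $\rho_1>0$ with $\rho_0\rho_1<1$. Consider random Motzkin paths $(\gamma^{(L)}_0,\dots,\gamma^{(L)}_L)$ sampled from $\Pr_L$ with boundary weights $\alpha_n=\rho_0^n$, $\beta_n=\rho_1^n$ ($n\ge0$), and set $\gamma^{(L)}_k=0$ for $k>L$. Let $\hat\rho=\max\{1,\rho_1\}$. Then, as $L\to\infty$, $\{\gamma^{(L)}_k\}_{k\ge0}\Rightarrow\{Z_k\}_{k\ge0}$ in the sense of finite-dimensional distributions, where $\{Z_k\}$ is a Markov chain with transition probabilities $\mathsf Q^{(\hat\rho)}_{n,m}$ and $Z_0=G+\widetilde G$, with $G,\widetilde G$ independent, $\Pr(G=n)=(1-\rho_0\hat\rho)(\rho_0\hat\rho)^n$ and $\Pr(\widetilde G=n)=(1-\rho_0/\hat\rho)(\rho_0/\hat\rho)^n$, $n\ge0$.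
   Context: A Motzkin path of length $L\ge1$ is a sequence $(\gamma_0,\dots,\gamma_L)$ of non-negative integers with $|\gamma_k-\gamma_{k-1}|\le1$; $\mathcal M^{(L)}$ is the set of all such paths. Weight: $w(\vec\gamma)=\sigma^{\#\{k:\gamma_k=\gamma_{k-1}\}}$. Probability: $\Pr_L(\vec\gamma)=\alpha_{\gamma_0}\beta_{\gamma_L}w(\vec\gamma)/\sum_{\vec\eta\in\mathcal M^{(L)}}\alpha_{\eta_0}\beta_{\eta_L}w(\vec\eta)$. Transition kernels: for $\rho>1$, $$\mathsf Q^{(\rho)}_{n,m}=\frac{1}{\rho+1/\rho+\sigma}\begin{cases}\frac{\rho^{n+2}-\rho^{-(n+2)}}{\rho^{n+1}-\rho^{-(n+1)}}, & m=n+1,\\ \sigma, & m=n,\\ \frac{\rho^{n}-\rho^{-n}}{\rho^{n+1}-\rho^{-(n+1)}}, & m=n-1,\\ 0,&\text{otherwise},\end{cases}$$ and $\mathsf Q^{(1)}_{n,m}$ equals $\frac{1}{2+\sigma}\frac{n+2}{n+1}$ if $m=n+1$, $\frac{\sigma}{2+\sigma}$ if $m=n$, $\frac{1}{2+\sigma}\frac{n}{n+1}$ if $m=n-1\ge0$, and $0$ otherwise. *)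

theory Defs
  imports "HOL-Analysis.Analysis"
begin

definition motzkin_paths :: "nat \<Rightarrow> nat list set" where
  "motzkin_paths L = {g. length g = Suc L \<and>
     (\<forall>k\<in>{1..L}. \<bar>int (g ! k) - int (g ! (k - 1))\<bar> \<le> 1)}"

definition flat_steps :: "nat list \<Rightarrow> nat" where
  "flat_steps g = card {k. 1 \<le> k \<and> k < length g \<and> g ! k = g ! (k - 1)}"

definition path_weight :: "real \<Rightarrow> (nat \<Rightarrow> real) \<Rightarrow> (nat \<Rightarrow> real) \<Rightarrow> nat list \<Rightarrow> real" where
  "path_weight \<sigma> \<alpha> \<beta> g = \<alpha> (g ! 0) * \<beta> (g ! (length g - 1)) * \<sigma> ^ flat_steps g"

definition PrL :: "real \<Rightarrow> (nat \<Rightarrow> real) \<Rightarrow> (nat \<Rightarrow> real) \<Rightarrow> nat \<Rightarrow> nat list set \<Rightarrow> real" where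
  "PrL \<sigma> \<alpha> \<beta> L A =
     (\<Sum>\<^sub>\<infinity>g\<in>motzkin_paths L \<inter> A. path_weight \<sigma> \<alpha> \<beta> g) /
     (\<Sum>\<^sub>\<infinity>g\<in>motzkin_paths L. path_weight \<sigma> \<alpha> \<beta> g)"

definition gam :: "nat list \<Rightarrow> nat \<Rightarrow> nat" where
  "gam g k = (if k < length g then g ! k else 0)"

definition Qker :: "real \<Rightarrow> real \<Rightarrow> nat \<Rightarrow> nat \<Rightarrow> real" where
  "Qker \<sigma> \<rho> n m =
    (if \<rho> = 1 then
       (if m = Suc n then (real n + 2) / (real n + 1) / (2 + \<sigma>)
        else if m = n then \<sigma> / (2 + \<sigma>)
        else if Suc m = n then real n / (real n + 1) / (2 + \<sigma>)
        else 0)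
     else
       (if m = Suc n then (\<rho> ^ (n + 2) - \<rho> powi -(int n + 2)) / (\<rho> ^ (n + 1) - \<rho> powi -(int n + 1))
              / (\<rho> + 1 / \<rho> + \<sigma>)
        else if m = n then \<sigma> / (\<rho> + 1 / \<rho> + \<sigma>)
        else if Suc m = n then (\<rho> ^ n - \<rho> powi -(int n)) / (\<rho> ^ (n + 1) - \<rho> powi -(int n + 1))
              / (\<rho> + 1 / \<rho> + \<sigma>)
        else 0))"

definition geom :: "real \<Rightarrow> nat \<Rightarrow> real" where
  "geom q n = (1 - q) * q ^ n"

text \<open>Law of G + G' for independent geometric G (parameter q1) and G' (parameter q2).\<close>
definition sum_geom_law :: "real \<Rightarrow> real \<Rightarrow> nat \<Rightarrow> real" where
  "sum_geom_law q1 q2 n = (\<Sum>j\<le>n. geom q1 j * geom q2 (n - j))"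

end

theory Submission
  imports Defs
begin


definition Tm :: "real \<Rightarrow> nat \<Rightarrow> nat \<Rightarrow> real" where
  "Tm \<sigma> n m = (if m = Suc n \<or> Suc m = n then 1 else if m = n then \<sigma> else 0)"

fun Wb :: "real \<Rightarrow> (nat \<Rightarrow> real) \<Rightarrow> nat \<Rightarrow> nat \<Rightarrow> real" where
  "Wb \<sigma> b 0 n = b n"
| "Wb \<sigma> b (Suc L) n = \<sigma> * Wb \<sigma> b L n + Wb \<sigma> b L (Suc n) + (if n = 0 then 0 else Wb \<sigma> b L (n - 1))"

definition Pfrom :: "nat \<Rightarrow> nat \<Rightarrow> nat list set" where
  "Pfrom L n = {g \<in> motzkin_paths L. g ! 0 = n}"

definition pw1 :: "real \<Rightarrow> real \<Rightarrow> nat list \<Rightarrow> real" where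
  "pw1 \<sigma> r g = r ^ (g ! (length g - 1)) * \<sigma> ^ flat_steps g"

lemma mp0: "motzkin_paths 0 = {[x] | x. True}"
  unfolding motzkin_paths_def by (auto simp: length_Suc_conv)

lemma mp_Suc: "g \<in> motzkin_paths (Suc L) \<longleftrightarrow>
   (\<exists>x g'. g = x # g' \<and> g' \<in> motzkin_paths L \<and> \<bar>int x - int (g' ! 0)\<bar> \<le> 1)"
proof
  assume g: "g \<in> motzkin_paths (Suc L)"
  then obtain x g' where gx: "g = x # g'" "length g' = Suc L"
    unfolding motzkin_paths_def by (auto simp: length_Suc_conv)
  have st: "\<forall>k\<in>{1..Suc L}. \<bar>int (g ! k) - int (g ! (k - 1))\<bar> \<le> 1"
    using g unfolding motzkin_paths_def by auto
  have "\<bar>int x - int (g' ! 0)\<bar> \<le> 1" using st[rule_format, of 1] gx by auto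
  moreover have "g' \<in> motzkin_paths L"
    unfolding motzkin_paths_def
  proof (safe)
    show "length g' = Suc L" by fact
    fix k assume k: "k \<in> {1..L}"
    have "Suc k \<in> {1..Suc L}" using k by auto
    from st[rule_format, OF this] have "\<bar>int (g ! Suc k) - int (g ! (Suc k - 1))\<bar> \<le> 1" .
    then show "\<bar>int (g' ! k) - int (g' ! (k - 1))\<bar> \<le> 1" using k gx
      by (cases k) auto
  qed
  ultimately show "\<exists>x g'. g = x # g' \<and> g' \<in> motzkin_paths L \<and> \<bar>int x - int (g' ! 0)\<bar> \<le> 1"
    using gx by blast
next
  assume "\<exists>x g'. g = x # g' \<and> g' \<in> motzkin_paths L \<and> \<bar>int x - int (g' ! 0)\<bar> \<le> 1"
  then obtain x g' where gx: "g = x # g'" "g' \<in> motzkin_paths L" "\<bar>int x - int (g' ! 0)\<bar> \<le> 1"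
    by blast
  show "g \<in> motzkin_paths (Suc L)"
    unfolding motzkin_paths_def
  proof (safe)
    show "length g = Suc (Suc L)" using gx unfolding motzkin_paths_def by auto
    fix k assume k: "k \<in> {1..Suc L}"
    show "\<bar>int (g ! k) - int (g ! (k - 1))\<bar> \<le> 1"
    proof (cases "k = 1")
      case True then show ?thesis using gx by auto
    next
      case False
      then obtain j where j: "k = Suc j" "j \<in> {1..L}" using k by (cases k) auto
      then show ?thesis using gx unfolding motzkin_paths_def by auto
    qed
  qed
qed

lemma flat_Cons:
  assumes "g' \<noteq> []"
  shows "flat_steps (x # g') = (if x = g' ! 0 then 1 else 0) + flat_steps g'"
proof -
  let ?S = "{k. 1 \<le> k \<and> k < length g' \<and> g' ! k = g' ! (k - 1)}"
  have eq: "{k. 1 \<le> k \<and> k < length (x # g') \<and> (x # g') ! k = (x # g') ! (k - 1)}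
      = (if x = g' ! 0 then {1} else {}) \<union> Suc ` ?S"
  proof (rule set_eqI)
    fix k
    show "k \<in> {k. 1 \<le> k \<and> k < length (x # g') \<and> (x # g') ! k = (x # g') ! (k - 1)} \<longleftrightarrow>
          k \<in> (if x = g' ! 0 then {1} else {}) \<union> Suc ` ?S"
    proof (cases k)
      case 0 then show ?thesis by auto
    next
      case (Suc j)
      show ?thesis
      proof (cases j)
        case 0 then show ?thesis using Suc assms by auto
      next
        case (Suc i)
        then show ?thesis using \<open>k = Suc j\<close> by (auto simp: image_iff)
      qed
    qed
  qed
  have fin: "finite ?S" by (rule finite_subset[of _ "{..<length g'}"]) auto
  have "1 \<notin> Suc ` ?S" by auto
  then show ?thesis unfolding flat_steps_def eq using fin
    by (auto simp: card_image)
qed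

lemma Pfrom0: "Pfrom 0 n = {[n]}"
  unfolding Pfrom_def mp0 by auto

definition nbrs :: "nat \<Rightarrow> nat set" where
  "nbrs n = {m. m \<le> Suc n \<and> \<bar>int n - int m\<bar> \<le> 1}"

lemma finite_nbrs: "finite (nbrs n)" unfolding nbrs_def by auto

lemma Pfrom_Suc: "Pfrom (Suc L) n = (\<lambda>(m, g). n # g) ` Sigma (nbrs n) (Pfrom L)"
proof (rule set_eqI)
  fix g
  show "g \<in> Pfrom (Suc L) n \<longleftrightarrow> g \<in> (\<lambda>(m, g). n # g) ` Sigma (nbrs n) (Pfrom L)"
  proof
    assume "g \<in> Pfrom (Suc L) n"
    then obtain g' where "g = n # g'" "g' \<in> motzkin_paths L" "\<bar>int n - int (g' ! 0)\<bar> \<le> 1"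
      unfolding Pfrom_def mp_Suc by auto
    then show "g \<in> (\<lambda>(m, g). n # g) ` Sigma (nbrs n) (Pfrom L)"
      unfolding Pfrom_def nbrs_def by (auto simp: image_iff intro!: bexI[of _ "(g' ! 0, g')"])
  next
    assume "g \<in> (\<lambda>(m, g). n # g) ` Sigma (nbrs n) (Pfrom L)"
    then show "g \<in> Pfrom (Suc L) n"
      unfolding Pfrom_def nbrs_def mp_Suc by auto
  qed
qed

lemma mp_nonempty: "g \<in> motzkin_paths L \<Longrightarrow> g \<noteq> []"
  unfolding motzkin_paths_def by auto

lemma finite_Pfrom: "finite (Pfrom L n)"
proof (induction L arbitrary: n)
  case 0 then show ?case by (simp add: Pfrom0)
next
  case (Suc L) then show ?case unfolding Pfrom_Suc
    by (intro finite_imageI finite_SigmaI finite_nbrs) auto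
qed

lemma inj_Pfrom: "inj_on (\<lambda>(m, g). n # g) (Sigma A (Pfrom L))"
  unfolding Pfrom_def inj_on_def by auto

lemma pw1_Cons:
  assumes "g \<in> Pfrom L m"
  shows "pw1 \<sigma> r (n # g) = (if n = m then \<sigma> else 1) * pw1 \<sigma> r g"
proof -
  have ne: "g \<noteq> []" and g0: "g ! 0 = m" using assms mp_nonempty unfolding Pfrom_def by auto
  have "(n # g) ! (length (n # g) - 1) = g ! (length g - 1)"
    using ne by (cases g) auto
  then show ?thesis unfolding pw1_def using flat_Cons[OF ne, of n] g0 by (auto simp: power_add)
qed

lemma nbrs_sum:
  "(\<Sum>m\<in>nbrs n. f m) = (if n = 0 then f 0 + f 1 else f (n - 1) + f n + f (Suc n))"
proof (cases n)
  case 0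
  have "nbrs n = {0, 1}" using 0 unfolding nbrs_def by auto
  then show ?thesis using 0 by simp
next
  case (Suc k)
  have "nbrs n = {k, Suc k, Suc (Suc k)}" using Suc unfolding nbrs_def by auto
  then show ?thesis using Suc by (simp add: add.assoc)
qed

lemma sum_Pfrom: "(\<Sum>g\<in>Pfrom L n. pw1 \<sigma> r g) = Wb \<sigma> (\<lambda>n. r ^ n) L n"
proof (induction L arbitrary: n)
  case 0
  have "{k. 1 \<le> k \<and> k < length [n] \<and> [n] ! k = [n] ! (k - 1)} = {}" by auto
  then have "flat_steps [n] = 0" unfolding flat_steps_def by simp
  then show ?case by (simp add: Pfrom0 pw1_def)
next
  case (Suc L)
  have "(\<Sum>g\<in>Pfrom (Suc L) n. pw1 \<sigma> r g)
      = (\<Sum>x\<in>Sigma (nbrs n) (Pfrom L). pw1 \<sigma> r ((\<lambda>(m, g). n # g) x))"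
    unfolding Pfrom_Suc by (subst sum.reindex[OF inj_Pfrom]) (simp add: o_def)
  also have "\<dots> = (\<Sum>m\<in>nbrs n. \<Sum>g\<in>Pfrom L m. pw1 \<sigma> r (n # g))"
    by (subst sum.Sigma) (auto simp: finite_nbrs finite_Pfrom split_beta intro!: sum.cong)
  also have "\<dots> = (\<Sum>m\<in>nbrs n. (if n = m then \<sigma> else 1) * Wb \<sigma> (\<lambda>n. r ^ n) L m)"
    by (intro sum.cong refl) (simp add: pw1_Cons sum_distrib_left[symmetric] Suc.IH)
  also have "\<dots> = Wb \<sigma> (\<lambda>n. r ^ n) (Suc L) n"
    by (simp add: nbrs_sum) linarith
  finally show ?case .
qed



definition Pre :: "nat \<Rightarrow> nat \<Rightarrow> (nat \<Rightarrow> nat) \<Rightarrow> nat list set" where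
  "Pre L K ns = {g \<in> Pfrom L (ns 0). \<forall>k\<le>K. g ! k = ns k}"

lemma Pre_Suc:
  "Pre (Suc L) (Suc K) ns =
     (if \<bar>int (ns 0) - int (ns 1)\<bar> \<le> 1 then (Cons (ns 0)) ` Pre L K (\<lambda>i. ns (Suc i)) else {})"
proof (rule set_eqI)
  fix g
  show "g \<in> Pre (Suc L) (Suc K) ns \<longleftrightarrow>
     g \<in> (if \<bar>int (ns 0) - int (ns 1)\<bar> \<le> 1 then (Cons (ns 0)) ` Pre L K (\<lambda>i. ns (Suc i)) else {})"
  proof
    assume g: "g \<in> Pre (Suc L) (Suc K) ns"
    then obtain x g' where gx: "g = x # g'" "g' \<in> motzkin_paths L" "\<bar>int x - int (g' ! 0)\<bar> \<le> 1"
      unfolding Pre_def Pfrom_def mp_Suc by auto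
    have all: "\<forall>k\<le>Suc K. g ! k = ns k" using g unfolding Pre_def by auto
    have x: "x = ns 0" using all[rule_format, of 0] gx by auto
    have all': "\<forall>k\<le>K. g' ! k = ns (Suc k)"
    proof (intro allI impI)
      fix k assume "k \<le> K"
      then show "g' ! k = ns (Suc k)" using all[rule_format, of "Suc k"] gx by auto
    qed
    have "g' ! 0 = ns 1" using all' by auto
    then show "g \<in> (if \<bar>int (ns 0) - int (ns 1)\<bar> \<le> 1 then (Cons (ns 0)) ` Pre L K (\<lambda>i. ns (Suc i)) else {})"
      using gx x all' unfolding Pre_def Pfrom_def by auto
  next
    assume g: "g \<in> (if \<bar>int (ns 0) - int (ns 1)\<bar> \<le> 1 then (Cons (ns 0)) ` Pre L K (\<lambda>i. ns (Suc i)) else {})"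
    then have c: "\<bar>int (ns 0) - int (ns 1)\<bar> \<le> 1" by (auto split: if_splits)
    with g obtain g' where gx: "g = ns 0 # g'" "g' \<in> Pre L K (\<lambda>i. ns (Suc i))" by auto
    have g'm: "g' \<in> motzkin_paths L" and g'0: "g' ! 0 = ns 1" and all: "\<forall>k\<le>K. g' ! k = ns (Suc k)"
      using gx unfolding Pre_def Pfrom_def by auto
    have "g \<in> motzkin_paths (Suc L)" unfolding mp_Suc using gx g'm g'0 c by auto
    moreover have "\<forall>k\<le>Suc K. g ! k = ns k"
    proof (intro allI impI)
      fix k assume "k \<le> Suc K"
      then show "g ! k = ns k" using all gx by (cases k) auto
    qed
    ultimately show "g \<in> Pre (Suc L) (Suc K) ns" unfolding Pre_def Pfrom_def using gx by auto
  qed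
qed

lemma Pre_0: "Pre L 0 ns = Pfrom L (ns 0)"
  unfolding Pre_def Pfrom_def by auto

lemma finite_Pre: "finite (Pre L K ns)"
  unfolding Pre_def by (rule finite_subset[OF _ finite_Pfrom[of L "ns 0"]]) auto

lemma sum_Pre:
  assumes "K \<le> L"
  shows "(\<Sum>g\<in>Pre L K ns. pw1 \<sigma> r g) =
    (\<Prod>i<K. Tm \<sigma> (ns i) (ns (Suc i))) * Wb \<sigma> (\<lambda>n. r ^ n) (L - K) (ns K)"
  using assms
proof (induction K arbitrary: L ns)
  case 0 then show ?case by (simp add: Pre_0 sum_Pfrom)
next
  case (Suc K)
  then obtain L' where L: "L = Suc L'" "K \<le> L'" by (cases L) auto
  show ?case
  proof (cases "\<bar>int (ns 0) - int (ns 1)\<bar> \<le> 1")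
    case False
    then have "Tm \<sigma> (ns 0) (ns 1) = 0" unfolding Tm_def by auto
    then show ?thesis using False unfolding L Pre_Suc by (subst prod.lessThan_Suc_shift) simp
  next
    case True
    have "(\<Sum>g\<in>Pre L (Suc K) ns. pw1 \<sigma> r g) = (\<Sum>g\<in>Pre L' K (\<lambda>i. ns (Suc i)). pw1 \<sigma> r (ns 0 # g))"
      unfolding L Pre_Suc using True by (simp add: sum.reindex inj_on_def)
    also have "\<dots> = (\<Sum>g\<in>Pre L' K (\<lambda>i. ns (Suc i)). (if ns 0 = ns 1 then \<sigma> else 1) * pw1 \<sigma> r g)"
    proof (intro sum.cong refl)
      fix g assume "g \<in> Pre L' K (\<lambda>i. ns (Suc i))"
      then have "g \<in> Pfrom L' (ns 1)" unfolding Pre_def by auto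
      then show "pw1 \<sigma> r (ns 0 # g) = (if ns 0 = ns 1 then \<sigma> else 1) * pw1 \<sigma> r g"
        by (rule pw1_Cons)
    qed
    also have "\<dots> = Tm \<sigma> (ns 0) (ns 1) * ((\<Prod>i<K. Tm \<sigma> (ns (Suc i)) (ns (Suc (Suc i)))) *
        Wb \<sigma> (\<lambda>n. r ^ n) (L' - K) (ns (Suc K)))"
      using True by (simp add: sum_distrib_left[symmetric] Suc.IH[OF L(2)] Tm_def) linarith
    also have "\<dots> = (\<Prod>i<Suc K. Tm \<sigma> (ns i) (ns (Suc i))) * Wb \<sigma> (\<lambda>n. r ^ n) (L - Suc K) (ns (Suc K))"
      using L by (subst prod.lessThan_Suc_shift) simp
    finally show ?thesis .
  qed
qed

lemma Wb_nonneg: "\<sigma> \<ge> 0 \<Longrightarrow> (\<And>n. b n \<ge> 0) \<Longrightarrow> Wb \<sigma> b L n \<ge> 0"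
  by (induction L arbitrary: n) auto

lemma pw_eq: "path_weight \<sigma> (\<lambda>n. a ^ n) (\<lambda>n. r ^ n) g = a ^ (g ! 0) * pw1 \<sigma> r g"
  unfolding path_weight_def pw1_def by simp

lemma numerator_eq:
  assumes "K \<le> L"
  shows "(\<Sum>\<^sub>\<infinity>g\<in>motzkin_paths L \<inter> {g. \<forall>k\<le>K. gam g k = ns k}. path_weight \<sigma> (\<lambda>n. a ^ n) (\<lambda>n. r ^ n) g)
     = a ^ (ns 0) * ((\<Prod>i<K. Tm \<sigma> (ns i) (ns (Suc i))) * Wb \<sigma> (\<lambda>n. r ^ n) (L - K) (ns K))"
proof -
  have eq: "motzkin_paths L \<inter> {g. \<forall>k\<le>K. gam g k = ns k} = Pre L K ns"
    using assms unfolding Pre_def Pfrom_def gam_def motzkin_paths_def by auto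
  have "(\<Sum>\<^sub>\<infinity>g\<in>Pre L K ns. path_weight \<sigma> (\<lambda>n. a ^ n) (\<lambda>n. r ^ n) g)
      = (\<Sum>g\<in>Pre L K ns. a ^ (ns 0) * pw1 \<sigma> r g)"
    using finite_Pre by (auto simp: pw_eq Pre_def intro!: sum.cong)
  also have "\<dots> = a ^ (ns 0) * ((\<Prod>i<K. Tm \<sigma> (ns i) (ns (Suc i))) * Wb \<sigma> (\<lambda>n. r ^ n) (L - K) (ns K))"
    by (simp add: sum_distrib_left[symmetric] sum_Pre[OF assms])
  finally show ?thesis unfolding eq .
qed

lemma pw1_nonneg: "\<sigma> \<ge> 0 \<Longrightarrow> r \<ge> 0 \<Longrightarrow> pw1 \<sigma> r g \<ge> 0"
  unfolding pw1_def by simp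

lemma denominator_eq:
  assumes "\<sigma> \<ge> 0" "a \<ge> 0" "r \<ge> 0"
    and summ: "summable (\<lambda>n. a ^ n * Wb \<sigma> (\<lambda>n. r ^ n) L n)"
  shows "(\<Sum>\<^sub>\<infinity>g\<in>motzkin_paths L. path_weight \<sigma> (\<lambda>n. a ^ n) (\<lambda>n. r ^ n) g)
     = (\<Sum>n. a ^ n * Wb \<sigma> (\<lambda>n. r ^ n) L n)"
proof -
  let ?f = "\<lambda>x::nat \<times> nat list. path_weight \<sigma> (\<lambda>n. a ^ n) (\<lambda>n. r ^ n) (snd x)"
  let ?G = "\<lambda>n. a ^ n * Wb \<sigma> (\<lambda>n. r ^ n) L n"
  have img: "motzkin_paths L = snd ` Sigma UNIV (Pfrom L)"
    unfolding Pfrom_def by (auto simp: image_iff)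
  have inj: "inj_on snd (Sigma UNIV (Pfrom L))"
    unfolding Pfrom_def inj_on_def by auto
  have Wnn: "\<And>n. Wb \<sigma> (\<lambda>n. r ^ n) L n \<ge> 0" using assms by (intro Wb_nonneg) auto
  have piece: "((\<lambda>g. ?f (n, g)) has_sum ?G n) (Pfrom L n)" for n
  proof -
    have "(\<Sum>g\<in>Pfrom L n. path_weight \<sigma> (\<lambda>n. a ^ n) (\<lambda>n. r ^ n) g) = ?G n"
      by (auto simp: pw_eq Pfrom_def sum_distrib_left[symmetric] sum_Pfrom[symmetric] intro!: sum.cong)
    then show ?thesis using finite_Pfrom by (auto intro: has_sum_finiteI)
  qed
  have Ghs: "(?G has_sum (\<Sum>n. ?G n)) UNIV"
    using summ Wnn assms by (intro sums_nonneg_imp_has_sum) (auto simp: summable_sums)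
  have "?f summable_on Sigma UNIV (Pfrom L)"
    using piece Ghs assms
    by (intro summable_on_SigmaI[where g = ?G]) (auto simp: pw_eq pw1_nonneg has_sum_imp_summable)
  then have "(?f has_sum (\<Sum>n. ?G n)) (Sigma UNIV (Pfrom L))"
    using piece Ghs by (intro has_sum_SigmaI) auto
  then have "((\<lambda>g. path_weight \<sigma> (\<lambda>n. a ^ n) (\<lambda>n. r ^ n) g) has_sum (\<Sum>n. ?G n)) (motzkin_paths L)"
    unfolding img by (subst has_sum_reindex[OF inj]) (simp add: o_def)
  then show ?thesis by (rule infsumI)
qed



lemma powi_neg_nat: "(x::real) powi (- int n) = 1 / x ^ n"
  by (simp add: power_int_minus divide_inverse)

lemma powi_neg1: "(x::real) powi (- (int n + 1)) = 1 / x ^ (n + 1)"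
proof -
  have "- (int n + 1) = - int (n + 1)" by simp
  then show ?thesis by (simp only: powi_neg_nat)
qed

lemma powi_neg2: "(x::real) powi (- (int n + 2)) = 1 / x ^ (n + 2)"
proof -
  have "- (int n + 2) = - int (n + 2)" by simp
  then show ?thesis by (simp only: powi_neg_nat)
qed

definition hr :: "real \<Rightarrow> nat \<Rightarrow> real" where
  "hr \<rho> n = (if \<rho> = 1 then real n + 1 else \<rho> ^ (n + 1) - 1 / \<rho> ^ (n + 1))"

definition Hr :: "real \<Rightarrow> real \<Rightarrow> real" where
  "Hr a \<rho> = (if \<rho> = 1 then 1 / (1 - a) ^ 2 else \<rho> / (1 - a * \<rho>) - (1 / \<rho>) / (1 - a / \<rho>))"

lemma hr_pos: "\<rho> \<ge> 1 \<Longrightarrow> hr \<rho> n > 0"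
proof (cases "\<rho> = 1")
  case False
  assume r: "\<rho> \<ge> 1"
  then have "\<rho> > 1" using False by auto
  then have a: "\<rho> ^ (n + 1) > 1" by (intro one_less_power) auto
  then have "1 / \<rho> ^ (n + 1) < 1" by auto
  moreover have "hr \<rho> n = \<rho> ^ (n + 1) - 1 / \<rho> ^ (n + 1)" using False by (simp add: hr_def)
  ultimately show ?thesis using a by linarith
qed (auto simp: hr_def)

lemma Q_eq:
  assumes "\<rho> \<ge> 1" "\<sigma> > 0"
  shows "Qker \<sigma> \<rho> n m = Tm \<sigma> n m * hr \<rho> m / ((\<rho> + 1 / \<rho> + \<sigma>) * hr \<rho> n)"
proof (cases "\<rho> = 1")
  case True
  have a: "real k + 1 \<noteq> 0" for k by simp
  have b: "\<sigma> + 2 \<noteq> 0" "2 + \<sigma> \<noteq> 0" using assms by auto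
  show ?thesis using True a b unfolding Qker_def Tm_def hr_def
    by (auto simp: divide_simps)
next
  case False
  have hp: "hr \<rho> k \<noteq> 0" for k using hr_pos[OF assms(1)] by (metis less_irrefl)
  have lp: "\<rho> + 1 / \<rho> + \<sigma> \<noteq> 0" using assms by (smt (verit) divide_pos_pos)
  have e1: "\<rho> ^ (n + 2) - \<rho> powi - (int n + 2) = hr \<rho> (Suc n)"
    unfolding powi_neg2 using False by (simp add: hr_def)
  have e2: "\<rho> ^ (n + 1) - \<rho> powi - (int n + 1) = hr \<rho> n"
    unfolding powi_neg1 using False by (simp add: hr_def)
  have e3: "Suc m = n \<Longrightarrow> \<rho> ^ n - \<rho> powi - (int n) = hr \<rho> m"
    unfolding powi_neg_nat using False by (auto simp: hr_def)
  define l where "l = \<rho> + 1 / \<rho> + \<sigma>"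
  have l0: "l \<noteq> 0" using lp l_def by simp
  show ?thesis
    using False hp l0 unfolding Qker_def Tm_def e1 e2 l_def[symmetric]
    by (auto simp: e3 field_simps)
qed

lemma prodQ:
  assumes "\<rho> \<ge> 1" "\<sigma> > 0"
  shows "(\<Prod>i<K. Qker \<sigma> \<rho> (ns i) (ns (Suc i))) =
    (\<Prod>i<K. Tm \<sigma> (ns i) (ns (Suc i))) * hr \<rho> (ns K) / ((\<rho> + 1 / \<rho> + \<sigma>) ^ K * hr \<rho> (ns 0))"
proof (induction K)
  case 0 then show ?case using hr_pos[OF assms(1), of "ns 0"] by simp
next
  case (Suc K)
  have hp: "hr \<rho> k \<noteq> 0" for k using hr_pos[OF assms(1)] by (metis less_irrefl)
  have lp: "\<rho> + 1 / \<rho> + \<sigma> \<noteq> 0" using assms by (smt (verit) divide_pos_pos)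
  have "(\<Prod>i<Suc K. Qker \<sigma> \<rho> (ns i) (ns (Suc i))) = (\<Prod>i<K. Qker \<sigma> \<rho> (ns i) (ns (Suc i))) * Qker \<sigma> \<rho> (ns K) (ns (Suc K))"
    by (simp only: prod.lessThan_Suc)
  also have "\<dots> =
     (\<Prod>i<K. Tm \<sigma> (ns i) (ns (Suc i))) * hr \<rho> (ns K) / ((\<rho> + 1 / \<rho> + \<sigma>) ^ K * hr \<rho> (ns 0))
     * (Tm \<sigma> (ns K) (ns (Suc K)) * hr \<rho> (ns (Suc K)) / ((\<rho> + 1 / \<rho> + \<sigma>) * hr \<rho> (ns K)))"
    by (simp only: Suc.IH Q_eq[OF assms, of "ns K" "ns (Suc K)"])
  also have "\<dots> = (\<Prod>i<Suc K. Tm \<sigma> (ns i) (ns (Suc i))) * hr \<rho> (ns (Suc K)) / ((\<rho> + 1 / \<rho> + \<sigma>) ^ Suc K * hr \<rho> (ns 0))"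
  proof -
    define l where "l = \<rho> + 1 / \<rho> + \<sigma>"
    have "l \<noteq> 0" using lp l_def by simp
    then show ?thesis unfolding l_def[symmetric] using hp[of "ns K"] hp[of "ns 0"]
      by (simp add: field_simps)
  qed
  finally show ?case .
qed

lemma aq: "a / \<rho> < 1" if "0 < a" "a * \<rho> < 1" "\<rho> \<ge> 1" for a \<rho> :: real
proof -
  have "a < 1" using that by (smt (verit) mult_le_cancel_left1)
  then have "a < \<rho>" using that by linarith
  then show ?thesis using that by simp
qed

lemma H_sums:
  assumes "0 < a" "a * \<rho> < 1" "\<rho> \<ge> 1"
  shows "(\<lambda>k. a ^ k * hr \<rho> k) sums Hr a \<rho>"
proof (cases "\<rho> = 1")
  case True
  have "a < 1" using assms True by simp
  then have "(\<lambda>n. of_nat (Suc n) * a ^ n) sums (1 / (1 - a)^2)"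
    using assms by (intro geometric_deriv_sums) auto
  moreover have "(\<lambda>n. a ^ n * hr \<rho> n) = (\<lambda>n. of_nat (Suc n) * a ^ n)"
    using True unfolding hr_def by (simp add: fun_eq_iff)
  ultimately show ?thesis using True unfolding Hr_def by simp
next
  case False
  have s1: "(\<lambda>k. \<rho> * (a * \<rho>) ^ k) sums (\<rho> * (1 / (1 - a * \<rho>)))"
    using assms by (intro sums_mult geometric_sums) auto
  have "a / \<rho> < 1" using aq[OF assms] .
  then have s2: "(\<lambda>k. (1 / \<rho>) * (a / \<rho>) ^ k) sums ((1 / \<rho>) * (1 / (1 - a / \<rho>)))"
    using assms by (intro sums_mult geometric_sums) auto
  have "(\<lambda>k. \<rho> * (a * \<rho>) ^ k - (1 / \<rho>) * (a / \<rho>) ^ k) sums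
      (\<rho> * (1 / (1 - a * \<rho>)) - (1 / \<rho>) * (1 / (1 - a / \<rho>)))"
    by (rule sums_diff[OF s1 s2])
  moreover have "\<rho> * (a * \<rho>) ^ k - (1 / \<rho>) * (a / \<rho>) ^ k = a ^ k * hr \<rho> k" for k
    using False assms unfolding hr_def by (simp add: power_mult_distrib power_divide algebra_simps)
  ultimately show ?thesis using False unfolding Hr_def by simp
qed

lemma Hr_pos:
  assumes "0 < a" "a * \<rho> < 1" "\<rho> \<ge> 1"
  shows "Hr a \<rho> > 0"
proof -
  have "Hr a \<rho> = (\<Sum>k. a ^ k * hr \<rho> k)" using H_sums[OF assms] by (simp add: sums_iff)
  also have "\<dots> > 0"
    using H_sums[OF assms] assms hr_pos[OF assms(3)]
    by (intro suminf_pos) (auto simp: sums_iff)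
  finally show ?thesis .
qed

lemma sgl_eq:
  assumes "0 < a" "a * \<rho> < 1" "\<rho> \<ge> 1"
  shows "sum_geom_law (a * \<rho>) (a / \<rho>) n = a ^ n * hr \<rho> n / Hr a \<rho>"
proof (cases "\<rho> = 1")
  case True
  have "sum_geom_law (a * \<rho>) (a / \<rho>) n = (\<Sum>j\<le>n. (1 - a)^2 * a ^ n)"
    unfolding sum_geom_law_def geom_def True
  proof (intro sum.cong refl)
    fix j assume "j \<in> {..n}"
    then have "a ^ j * a ^ (n - j) = a ^ n" by (simp add: power_add[symmetric])
    then show "(1 - a * 1) * (a * 1) ^ j * ((1 - a / 1) * (a / 1) ^ (n - j)) = (1 - a)\<^sup>2 * a ^ n"
      by (simp add: power2_eq_square algebra_simps)
  qed
  also have "\<dots> = a ^ n * hr \<rho> n / Hr a \<rho>"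
    using True assms by (simp add: hr_def Hr_def)
  finally show ?thesis .
next
  case False
  have r1: "\<rho> > 1" using False assms by auto
  have aq1: "a / \<rho> < 1" using aq[OF assms] .
  have q: "(a * \<rho>) ^ j * (a / \<rho>) ^ (n - j) = a ^ n / \<rho> ^ n * (\<rho> ^ 2) ^ j" if "j \<le> n" for j
  proof -
    have "(a * \<rho>) ^ j * (a / \<rho>) ^ (n - j) = a ^ (j + (n - j)) * \<rho> ^ j / \<rho> ^ (n - j)"
      by (simp add: power_mult_distrib power_divide power_add)
    also have "\<dots> = a ^ n * \<rho> ^ j / \<rho> ^ (n - j)" using that by simp
    also have "\<dots> = a ^ n / \<rho> ^ n * (\<rho> ^ 2) ^ j"
    proof -
      have e: "\<rho> ^ n = \<rho> ^ j * \<rho> ^ (n - j)" using that by (simp add: power_add[symmetric])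
      have e2: "(\<rho> ^ 2) ^ j = \<rho> ^ j * \<rho> ^ j" by (simp add: power_mult[symmetric] mult_2 power_add)
      have "\<rho> ^ j > 0" "\<rho> ^ (n - j) > 0" using r1 by auto
      then show ?thesis unfolding e e2 by (simp add: field_simps)
    qed
    finally show ?thesis .
  qed
  have r2: "\<rho> ^ 2 \<noteq> 1" using r1 by (smt (verit) one_less_power zero_less_numeral)
  have gs: "(\<Sum>j\<le>n. (\<rho> ^ 2) ^ j) = ((\<rho> ^ 2) ^ (n + 1) - 1) / (\<rho> ^ 2 - 1)"
    using geometric_sum[OF r2, of "n+1"] by (simp add: lessThan_Suc_atMost)
  have "sum_geom_law (a * \<rho>) (a / \<rho>) n = (\<Sum>j\<le>n. ((1 - a * \<rho>) * (1 - a / \<rho>) * (a ^ n / \<rho> ^ n)) * (\<rho> ^ 2) ^ j)"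
    unfolding sum_geom_law_def geom_def
  proof (intro sum.cong refl)
    fix j assume "j \<in> {..n}"
    then have "(a * \<rho>) ^ j * (a / \<rho>) ^ (n - j) = a ^ n / \<rho> ^ n * (\<rho> ^ 2) ^ j" using q by auto
    then show "(1 - a * \<rho>) * (a * \<rho>) ^ j * ((1 - a / \<rho>) * (a / \<rho>) ^ (n - j)) =
      (1 - a * \<rho>) * (1 - a / \<rho>) * (a ^ n / \<rho> ^ n) * (\<rho>\<^sup>2) ^ j"
      by (metis (no_types, lifting) mult.assoc mult.left_commute)
  qed
  also have "\<dots> = (1 - a * \<rho>) * (1 - a / \<rho>) * (a ^ n / \<rho> ^ n) * (((\<rho> ^ 2) ^ (n + 1) - 1) / (\<rho> ^ 2 - 1))"
    by (subst sum_distrib_left[symmetric]) (simp only: gs)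
  also have "\<dots> = a ^ n * hr \<rho> n / Hr a \<rho>"
  proof -
    have h: "hr \<rho> n = ((\<rho> ^ 2) ^ (n + 1) - 1) / \<rho> ^ (n + 1)"
      using False r1 unfolding hr_def by (simp add: power_mult[symmetric] field_simps power2_eq_square power_add)
    have ar: "1 - a / \<rho> = (\<rho> - a) / \<rho>" using r1 by (simp add: field_simps)
    have p1: "1 - a * \<rho> \<noteq> 0" "\<rho> - a \<noteq> 0" "\<rho> ^ 2 - 1 \<noteq> 0" using assms aq1 r2 r1 ar by auto
    have H: "Hr a \<rho> = (\<rho> ^ 2 - 1) / ((1 - a * \<rho>) * (\<rho> - a))"
      using False r1 p1 unfolding Hr_def ar by (simp add: field_simps power2_eq_square)
    show ?thesis unfolding h H ar using p1 r1 by (simp add: field_simps)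
  qed
  finally show ?thesis .
qed


lemma shift_ratio:
  fixes c :: "nat \<Rightarrow> real"
  assumes cpos: "eventually (\<lambda>L. c L > 0) sequentially"
    and clim: "(\<lambda>L. c (Suc L) / c L) \<longlonglongrightarrow> l"
  shows "(\<lambda>L. c (L + K) / c L) \<longlonglongrightarrow> l ^ K"
proof (induction K)
  case 0
  have "eventually (\<lambda>L. 1 = c (L + 0) / c L) sequentially"
    using cpos by eventually_elim auto
  then show ?case by (intro Lim_transform_eventually[OF tendsto_const]) auto
next
  case (Suc K)
  have a: "(\<lambda>L. c (Suc (L + K)) / c (L + K)) \<longlonglongrightarrow> l"
    using LIMSEQ_ignore_initial_segment[OF clim, of K] by simp
  have "(\<lambda>L. c (Suc (L + K)) / c (L + K) * (c (L + K) / c L)) \<longlonglongrightarrow> l * l ^ K"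
    by (intro tendsto_mult a Suc.IH)
  moreover have "eventually (\<lambda>L. c (Suc (L + K)) / c (L + K) * (c (L + K) / c L) = c (L + Suc K) / c L) sequentially"
  proof -
    from cpos obtain N where N: "\<And>L. L \<ge> N \<Longrightarrow> c L > 0" by (auto simp: eventually_sequentially)
    show ?thesis unfolding eventually_sequentially
    proof (rule exI[of _ N], intro allI impI)
      fix L assume "L \<ge> N"
      then have "c (L + K) > 0" using N by auto
      then show "c (Suc (L + K)) / c (L + K) * (c (L + K) / c L) = c (L + Suc K) / c L" by simp
    qed
  qed
  ultimately have "(\<lambda>L. c (L + Suc K) / c L) \<longlonglongrightarrow> l * l ^ K" by (rule Lim_transform_eventually)
  then show ?case by simp
qed

lemma assembly:
  fixes W :: "nat \<Rightarrow> nat \<Rightarrow> real" and c Z :: "nat \<Rightarrow> real"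
  assumes cpos: "eventually (\<lambda>L. c L > 0) sequentially"
    and Wlim: "\<And>n. (\<lambda>L. W L n / c L) \<longlonglongrightarrow> \<kappa> * h n"
    and clim: "(\<lambda>L. c (Suc L) / c L) \<longlonglongrightarrow> l"
    and Zlim: "(\<lambda>L. Z L / c L) \<longlonglongrightarrow> \<kappa> * H"
    and nz: "\<kappa> * H \<noteq> 0" "l \<noteq> 0"
  shows "(\<lambda>L. W (L - K) m / Z L) \<longlonglongrightarrow> h m / (l ^ K * H)"
proof -
  from cpos obtain N where N: "\<And>L. L \<ge> N \<Longrightarrow> c L > 0" by (auto simp: eventually_sequentially)
  have rK: "(\<lambda>L. c (L + K) / c L) \<longlonglongrightarrow> l ^ K" by (rule shift_ratio[OF cpos clim])
  have A: "(\<lambda>L. c (L - K) / c L) \<longlonglongrightarrow> 1 / l ^ K"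
  proof (rule LIMSEQ_offset[where k = K])
    have "(\<lambda>n. 1 / (c (n + K) / c n)) \<longlonglongrightarrow> 1 / l ^ K"
      using nz by (intro tendsto_divide tendsto_const rK) auto
    moreover have "eventually (\<lambda>n. 1 / (c (n + K) / c n) = c (n + K - K) / c (n + K)) sequentially"
      unfolding eventually_sequentially by (rule exI[of _ N]) (auto dest: N)
    ultimately show "(\<lambda>n. c (n + K - K) / c (n + K)) \<longlonglongrightarrow> 1 / l ^ K"
      by (rule Lim_transform_eventually)
  qed
  have B: "(\<lambda>L. W (L - K) m / c (L - K)) \<longlonglongrightarrow> \<kappa> * h m"
    by (rule LIMSEQ_offset[where k = K]) (simp add: Wlim)
  have "(\<lambda>L. W (L - K) m / c (L - K) * (c (L - K) / c L) / (Z L / c L)) \<longlonglongrightarrow> \<kappa> * h m * (1 / l ^ K) / (\<kappa> * H)"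
    using nz by (intro tendsto_divide tendsto_mult A B Zlim) auto
  moreover have "eventually (\<lambda>L. W (L - K) m / c (L - K) * (c (L - K) / c L) / (Z L / c L) = W (L - K) m / Z L) sequentially"
    unfolding eventually_sequentially
  proof (rule exI[of _ "N + K"], intro allI impI)
    fix L assume L: "L \<ge> N + K"
    then have "c (L - K) > 0" "c L > 0" using N by auto
    then show "W (L - K) m / c (L - K) * (c (L - K) / c L) / (Z L / c L) = W (L - K) m / Z L"
      by (simp add: field_simps)
  qed
  moreover have "\<kappa> * h m * (1 / l ^ K) / (\<kappa> * H) = h m / (l ^ K * H)"
    using nz by (simp add: field_simps)
  ultimately show ?thesis using Lim_transform_eventually by fastforce
qed



lemma main_reduction:
  fixes \<sigma> \<rho>0 \<rho>1 :: real
  assumes "\<sigma> > 0" and "0 < \<rho>0" and "\<rho>0 < 1" and "\<rho>1 > 0" and "\<rho>0 * \<rho>1 < 1"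
    and summ: "\<And>L. summable (\<lambda>n. \<rho>0 ^ n * Wb \<sigma> (\<lambda>n. \<rho>1 ^ n) L n)"
    and cpos: "eventually (\<lambda>L. c L > 0) sequentially"
    and kpos: "\<kappa> > 0"
    and Wlim: "\<And>n. (\<lambda>L. Wb \<sigma> (\<lambda>n. \<rho>1 ^ n) L n / c L) \<longlonglongrightarrow> \<kappa> * hr (max 1 \<rho>1) n"
    and clim: "(\<lambda>L. c (Suc L) / c L) \<longlonglongrightarrow> max 1 \<rho>1 + 1 / max 1 \<rho>1 + \<sigma>"
    and Zlim: "(\<lambda>L. (\<Sum>n. \<rho>0 ^ n * Wb \<sigma> (\<lambda>n. \<rho>1 ^ n) L n) / c L) \<longlonglongrightarrow> \<kappa> * Hr \<rho>0 (max 1 \<rho>1)"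
  shows "\<forall>(K::nat) (ns::nat \<Rightarrow> nat).
    (\<lambda>L. PrL \<sigma> (\<lambda>n. \<rho>0 ^ n) (\<lambda>n. \<rho>1 ^ n) L {g. \<forall>k\<le>K. gam g k = ns k})
    \<longlonglongrightarrow>
    sum_geom_law (\<rho>0 * max 1 \<rho>1) (\<rho>0 / max 1 \<rho>1) (ns 0) *
      (\<Prod>i<K. Qker \<sigma> (max 1 \<rho>1) (ns i) (ns (Suc i)))"
proof (intro allI)
  fix K :: nat and ns :: "nat \<Rightarrow> nat"
  define \<rho> where "\<rho> = max 1 \<rho>1"
  define W where "W = Wb \<sigma> (\<lambda>n. \<rho>1 ^ n)"
  define Z where "Z = (\<lambda>L. \<Sum>n. \<rho>0 ^ n * W L n)"
  define l where "l = \<rho> + 1 / \<rho> + \<sigma>"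
  define P where "P = (\<Prod>i<K. Tm \<sigma> (ns i) (ns (Suc i)))"
  have r1: "\<rho> \<ge> 1" unfolding \<rho>_def by simp
  have r0: "\<rho>0 * \<rho> < 1" unfolding \<rho>_def using assms by (auto simp: max_def)
  have Hp: "Hr \<rho>0 \<rho> > 0" by (rule Hr_pos[OF assms(2) r0 r1])
  have lp: "l > 0" unfolding l_def using r1 assms(1) by (smt (verit) divide_pos_pos)
  have hp: "hr \<rho> k > 0" for k using hr_pos[OF r1] .
  have lim1: "(\<lambda>L. W (L - K) (ns K) / Z L) \<longlonglongrightarrow> hr \<rho> (ns K) / (l ^ K * Hr \<rho>0 \<rho>)"
    using cpos Wlim clim Zlim kpos Hp lp unfolding W_def Z_def l_def \<rho>_def
    by (intro assembly[where c = c and \<kappa> = \<kappa>]) auto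
  have lim2: "(\<lambda>L. \<rho>0 ^ (ns 0) * (P * (W (L - K) (ns K) / Z L))) \<longlonglongrightarrow>
      \<rho>0 ^ (ns 0) * (P * (hr \<rho> (ns K) / (l ^ K * Hr \<rho>0 \<rho>)))"
    by (intro tendsto_mult tendsto_const lim1)
  have ev: "eventually (\<lambda>L. \<rho>0 ^ (ns 0) * (P * (W (L - K) (ns K) / Z L)) =
      PrL \<sigma> (\<lambda>n. \<rho>0 ^ n) (\<lambda>n. \<rho>1 ^ n) L {g. \<forall>k\<le>K. gam g k = ns k}) sequentially"
    unfolding eventually_sequentially
  proof (rule exI[of _ K], intro allI impI)
    fix L assume "L \<ge> K"
    have "PrL \<sigma> (\<lambda>n. \<rho>0 ^ n) (\<lambda>n. \<rho>1 ^ n) L {g. \<forall>k\<le>K. gam g k = ns k}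
        = \<rho>0 ^ (ns 0) * (P * W (L - K) (ns K)) / Z L"
      unfolding PrL_def numerator_eq[OF \<open>L \<ge> K\<close>] P_def W_def Z_def
      using assms summ by (subst denominator_eq) auto
    then show "\<rho>0 ^ (ns 0) * (P * (W (L - K) (ns K) / Z L)) =
      PrL \<sigma> (\<lambda>n. \<rho>0 ^ n) (\<lambda>n. \<rho>1 ^ n) L {g. \<forall>k\<le>K. gam g k = ns k}" by simp
  qed
  have target: "\<rho>0 ^ (ns 0) * (P * (hr \<rho> (ns K) / (l ^ K * Hr \<rho>0 \<rho>))) =
      sum_geom_law (\<rho>0 * \<rho>) (\<rho>0 / \<rho>) (ns 0) * (\<Prod>i<K. Qker \<sigma> \<rho> (ns i) (ns (Suc i)))"
    unfolding sgl_eq[OF assms(2) r0 r1] prodQ[OF r1 assms(1)] l_def[symmetric] P_def[symmetric]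
    using hp[of "ns 0"] Hp lp by (simp add: field_simps)
  show "(\<lambda>L. PrL \<sigma> (\<lambda>n. \<rho>0 ^ n) (\<lambda>n. \<rho>1 ^ n) L {g. \<forall>k\<le>K. gam g k = ns k})
    \<longlonglongrightarrow> sum_geom_law (\<rho>0 * max 1 \<rho>1) (\<rho>0 / max 1 \<rho>1) (ns 0) *
      (\<Prod>i<K. Qker \<sigma> (max 1 \<rho>1) (ns i) (ns (Suc i)))"
    using Lim_transform_eventually[OF lim2 ev] target unfolding \<rho>_def by simp
qed



fun FE :: "real \<Rightarrow> nat \<Rightarrow> (int \<Rightarrow> real) \<Rightarrow> int \<Rightarrow> real" where
  "FE \<sigma> 0 f x = f x"
| "FE \<sigma> (Suc L) f x = \<sigma> * FE \<sigma> L f x + FE \<sigma> L f (x + 1) + FE \<sigma> L f (x - 1)"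

lemma FE_add: "FE \<sigma> L (\<lambda>x. f x + g x) x = FE \<sigma> L f x + FE \<sigma> L g x"
  by (induction L arbitrary: x) (auto simp: algebra_simps)

lemma FE_scale: "FE \<sigma> L (\<lambda>x. a * f x) x = a * FE \<sigma> L f x"
  by (induction L arbitrary: x) (auto simp: algebra_simps)

lemma FE_exp:
  assumes "s \<noteq> 0"
  shows "FE \<sigma> L (\<lambda>x. s powi x) x = (s + 1 / s + \<sigma>) ^ L * s powi x"
proof (induction L arbitrary: x)
  case 0 then show ?case by simp
next
  case (Suc L)
  have a: "s powi (x + 1) = s powi x * s" using assms by (intro power_int_add_1) auto
  have b: "s powi (x - 1) = s powi x / s" using assms by (subst power_int_diff) auto
  have "FE \<sigma> (Suc L) (\<lambda>x. s powi x) x = \<sigma> * ((s + 1 / s + \<sigma>) ^ L * s powi x) +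
     (s + 1 / s + \<sigma>) ^ L * (s powi x * s) + (s + 1 / s + \<sigma>) ^ L * (s powi x / s)"
    by (simp only: FE.simps Suc.IH a b)
  also have "\<dots> = (s + 1 / s + \<sigma>) ^ Suc L * s powi x" using assms by (simp add: field_simps)
  finally show ?case .
qed

lemma FE_mono:
  assumes "\<sigma> \<ge> 0" "\<And>x. \<bar>f x\<bar> \<le> g x"
  shows "\<bar>FE \<sigma> L f x\<bar> \<le> FE \<sigma> L g x"
proof (induction L arbitrary: x)
  case 0 then show ?case using assms by simp
next
  case (Suc L)
  have "\<bar>\<sigma> * FE \<sigma> L f x\<bar> \<le> \<sigma> * FE \<sigma> L g x"
    using Suc.IH[of x] assms(1) by (simp add: abs_mult mult_left_mono)
  then show ?case using Suc.IH[of "x+1"] Suc.IH[of "x-1"] by simp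
qed

lemma FE_anti:
  assumes "\<And>x. f (-2 - x) = - f x"
  shows "FE \<sigma> L f (-2 - x) = - FE \<sigma> L f x"
proof (induction L arbitrary: x)
  case 0 then show ?case using assms by simp
next
  case (Suc L)
  have e1: "-2 - x + 1 = -2 - (x - 1)" and e2: "-2 - x - 1 = -2 - (x + 1)" by simp_all
  show ?case unfolding FE.simps e1 e2 Suc.IH by simp
qed

definition fr :: "real \<Rightarrow> int \<Rightarrow> real" where
  "fr r x = (if x \<ge> 0 then r powi x else if x = -1 then 0 else - (r powi (-2 - x)))"

lemma fr_anti: "fr r (-2 - x) = - fr r x"
  unfolding fr_def by auto

lemma FE_fr_m1: "FE \<sigma> L (fr r) (-1) = 0"
  using FE_anti[of "fr r" \<sigma> L "-1", OF fr_anti] by simp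

lemma W_FE: "Wb \<sigma> (\<lambda>n. r ^ n) L n = FE \<sigma> L (fr r) (int n)"
proof (induction L arbitrary: n)
  case 0 then show ?case by (simp add: fr_def)
next
  case (Suc L)
  show ?case
  proof (cases n)
    case 0
    then show ?thesis using Suc.IH FE_fr_m1[of \<sigma> L r] by simp
  next
    case (Suc k)
    then show ?thesis using Suc.IH by (simp add: of_nat_diff)
  qed
qed

lemma W_nonneg_bound:
  assumes "\<sigma> \<ge> 0" "r \<ge> 0"
  shows "Wb \<sigma> (\<lambda>n. r ^ n) L n \<le> (\<sigma> + 2) ^ L * (max 1 r) ^ (n + L)"
proof (induction L arbitrary: n)
  case 0 then show ?case using assms by (simp add: power_mono)
next
  case (Suc L)
  let ?M = "max 1 r"
  have M1: "?M \<ge> 1" by simp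
  have a: "(\<sigma> + 2) ^ L * ?M ^ (n + L) \<le> (\<sigma> + 2) ^ L * ?M ^ (n + Suc L)"
    using M1 assms by (intro mult_left_mono power_increasing) auto
  have b: "(if n = 0 then 0 else Wb \<sigma> (\<lambda>n. r ^ n) L (n - 1)) \<le> (\<sigma> + 2) ^ L * ?M ^ (n + Suc L)"
  proof (cases "n = 0")
    case True then show ?thesis using assms M1 by simp
  next
    case False
    then have "Wb \<sigma> (\<lambda>n. r ^ n) L (n - 1) \<le> (\<sigma> + 2) ^ L * ?M ^ (n - 1 + L)" using Suc.IH by blast
    also have "\<dots> \<le> (\<sigma> + 2) ^ L * ?M ^ (n + Suc L)"
      using M1 assms by (intro mult_left_mono power_increasing) auto
    finally show ?thesis using False by simp
  qed
  have c: "Wb \<sigma> (\<lambda>n. r ^ n) L (Suc n) \<le> (\<sigma> + 2) ^ L * ?M ^ (n + Suc L)"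
    using Suc.IH[of "Suc n"] by simp
  have d: "\<sigma> * Wb \<sigma> (\<lambda>n. r ^ n) L n \<le> \<sigma> * ((\<sigma> + 2) ^ L * ?M ^ (n + Suc L))"
    using order.trans[OF Suc.IH[of n] a] assms by (intro mult_left_mono) auto
  have "Wb \<sigma> (\<lambda>n. r ^ n) (Suc L) n \<le> (\<sigma> + 2) * ((\<sigma> + 2) ^ L * ?M ^ (n + Suc L))"
    using b c d by (simp add: algebra_simps)
  then show ?case by simp
qed

lemma W_summable:
  assumes "\<sigma> \<ge> 0" "r \<ge> 0" "0 \<le> a" "a * max 1 r < 1"
  shows "summable (\<lambda>n. a ^ n * Wb \<sigma> (\<lambda>n. r ^ n) L n)"
proof (rule summable_comparison_test')
  let ?M = "max 1 r"
  show "summable (\<lambda>n. ((\<sigma> + 2) ^ L * ?M ^ L) * (a * ?M) ^ n)"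
    using assms by (intro summable_mult summable_geometric) auto
  fix n
  have "0 \<le> Wb \<sigma> (\<lambda>n. r ^ n) L n" using assms by (intro Wb_nonneg) auto
  then have "norm (a ^ n * Wb \<sigma> (\<lambda>n. r ^ n) L n) = a ^ n * Wb \<sigma> (\<lambda>n. r ^ n) L n"
    using assms by simp
  also have "\<dots> \<le> a ^ n * ((\<sigma> + 2) ^ L * ?M ^ (n + L))"
    using assms W_nonneg_bound[OF assms(1,2)] by (intro mult_left_mono) auto
  also have "\<dots> = ((\<sigma> + 2) ^ L * ?M ^ L) * (a * ?M) ^ n"
    by (simp add: power_add power_mult_distrib algebra_simps)
  finally show "norm (a ^ n * Wb \<sigma> (\<lambda>n. r ^ n) L n) \<le> ((\<sigma> + 2) ^ L * ?M ^ L) * (a * ?M) ^ n" .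
qed



definition er :: "real \<Rightarrow> int \<Rightarrow> real" where
  "er r x = fr r x - r powi x + (1 / r ^ 2) * ((1 / r) powi x)"

lemma er_bound:
  assumes "r > 1"
  shows "\<bar>er r x\<bar> \<le> 1"
proof -
  have e: "(1 / r ^ 2) * ((1 / r) powi x) = r powi (-2 - x)"
  proof -
    have "r powi (-2 - x) = r powi (-2) / r powi x" using assms by (subst power_int_diff) auto
    also have "\<dots> = (1 / r ^ 2) * ((1 / r) powi x)"
      by (simp add: power_int_one_over power_int_minus_divide)
    finally show ?thesis by simp
  qed
  show ?thesis
  proof (cases "x \<ge> 0")
    case True
    have "r powi (-2 - x) \<le> r powi 0" using True assms by (intro power_int_increasing) auto
    moreover have "r powi (-2 - x) > 0" using assms by simp
    ultimately show ?thesis using True unfolding er_def fr_def e by simp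
  next
    case False
    show ?thesis
    proof (cases "x = -1")
      case True
      then show ?thesis unfolding er_def fr_def e by simp
    next
      case False2: False
      have "r powi x \<le> r powi 0" using False assms by (intro power_int_increasing) auto
      moreover have "r powi x > 0" using assms by simp
      ultimately show ?thesis using False False2 unfolding er_def fr_def e by simp
    qed
  qed
qed

lemma one_le_pows:
  fixes s :: real
  assumes "s > 1"
  shows "1 \<le> s powi x + (1 / s) powi x"
proof (cases "x \<ge> 0")
  case True
  have "s powi 0 \<le> s powi x" using True assms by (intro power_int_increasing) auto
  moreover have "(1 / s) powi x > 0" using assms by simp
  ultimately show ?thesis by simp
next
  case False
  have "s powi x \<le> s powi 0" using False assms by (intro power_int_increasing) auto
  moreover have "s powi x > 0" using assms by simp
  ultimately have "1 \<le> 1 / s powi x" by simp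
  moreover have "s powi x > 0" using assms by simp
  ultimately have "1 \<le> s powi x + 1 / s powi x" by linarith
  then show ?thesis by (simp add: power_int_one_over)
qed

lemma W_decomp:
  assumes "r > 1"
  shows "Wb \<sigma> (\<lambda>n. r ^ n) L n = (r + 1 / r + \<sigma>) ^ L * (hr r n / r) + FE \<sigma> L (er r) (int n)"
proof -
  have fr_eq: "fr r = (\<lambda>x. (r powi x + (-(1 / r ^ 2)) * (1 / r) powi x) + er r x)"
    by (simp add: er_def fun_eq_iff)
  have "Wb \<sigma> (\<lambda>n. r ^ n) L n = FE \<sigma> L (fr r) (int n)" by (rule W_FE)
  also have "\<dots> = FE \<sigma> L (\<lambda>x. r powi x) (int n) + (-(1 / r ^ 2)) * FE \<sigma> L (\<lambda>x. (1 / r) powi x) (int n)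
       + FE \<sigma> L (er r) (int n)"
    unfolding fr_eq FE_add FE_scale by simp
  also have "\<dots> = (r + 1 / r + \<sigma>) ^ L * r ^ n + (-(1 / r ^ 2)) * ((r + 1 / r + \<sigma>) ^ L * (1 / r) ^ n)
       + FE \<sigma> L (er r) (int n)"
    using assms by (simp add: FE_exp add_ac)
  also have "\<dots> = (r + 1 / r + \<sigma>) ^ L * (hr r n / r) + FE \<sigma> L (er r) (int n)"
    using assms unfolding hr_def by (simp add: field_simps power_add power2_eq_square)
  finally show ?thesis .
qed

lemma FE_er_bound:
  assumes "r > 1" "1 < s" "\<sigma> \<ge> 0"
  shows "\<bar>FE \<sigma> L (er r) (int n)\<bar> \<le> 2 * (s + 1 / s + \<sigma>) ^ L * s ^ n"
proof -
  have "\<bar>FE \<sigma> L (er r) (int n)\<bar> \<le> FE \<sigma> L (\<lambda>x. s powi x + (1 / s) powi x) (int n)"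
    using er_bound[OF assms(1)] one_le_pows[OF assms(2)] assms(3)
    by (intro FE_mono) (auto intro: order.trans)
  also have "\<dots> = (s + 1 / s + \<sigma>) ^ L * s ^ n + (s + 1 / s + \<sigma>) ^ L * (1 / s) ^ n"
    using assms unfolding FE_add by (simp add: FE_exp add_ac)
  also have "\<dots> \<le> 2 * (s + 1 / s + \<sigma>) ^ L * s ^ n"
  proof -
    have "(1 / s) ^ n \<le> 1" using assms by (simp add: power_le_one)
    also have "1 \<le> s ^ n" using assms by (simp add: one_le_power)
    finally have "(s + 1 / s + \<sigma>) ^ L * (1 / s) ^ n \<le> (s + 1 / s + \<sigma>) ^ L * s ^ n"
      using assms by (intro mult_left_mono) auto
    then show ?thesis by (simp add: mult.commute)
  qed
  finally show ?thesis .
qed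



lemma case_gt:
  fixes \<sigma> \<rho>0 \<rho>1 :: real
  assumes "\<sigma> > 0" and "0 < \<rho>0" and "\<rho>0 < 1" and r1: "\<rho>1 > 1" and "\<rho>0 * \<rho>1 < 1"
  shows "\<forall>(K::nat) (ns::nat \<Rightarrow> nat).
    (\<lambda>L. PrL \<sigma> (\<lambda>n. \<rho>0 ^ n) (\<lambda>n. \<rho>1 ^ n) L {g. \<forall>k\<le>K. gam g k = ns k})
    \<longlonglongrightarrow>
    sum_geom_law (\<rho>0 * max 1 \<rho>1) (\<rho>0 / max 1 \<rho>1) (ns 0) *
      (\<Prod>i<K. Qker \<sigma> (max 1 \<rho>1) (ns i) (ns (Suc i)))"
proof -
  define r where "r = \<rho>1"
  define s where "s = (1 + r) / 2"
  define P where "P = r + 1 / r + \<sigma>"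
  define Ps where "Ps = s + 1 / s + \<sigma>"
  define q where "q = Ps / P"
  define W where "W = Wb \<sigma> (\<lambda>n. \<rho>1 ^ n)"
  have mx: "max 1 \<rho>1 = r" unfolding r_def using r1 by simp
  have r1': "r > 1" using r1 r_def by simp
  have s1: "1 < s" "s < r" unfolding s_def using r1' by auto
  have Pp: "P > 0" unfolding P_def using r1' assms(1) by (smt (verit) divide_pos_pos)
  have Psp: "Ps > 0" unfolding Ps_def using s1 assms(1) by (smt (verit) divide_pos_pos)
  have PsP: "Ps < P"
  proof -
    have "1 / s - 1 / r = (r - s) / (r * s)" using s1 by (simp add: field_simps)
    also have "\<dots> < r - s"
    proof -
      have "r * s > 1" using s1 by (smt (verit) mult_less_cancel_left1)
      then show ?thesis using s1 by (simp add: divide_less_eq)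
    qed
    finally show ?thesis unfolding Ps_def P_def by simp
  qed
  have q01: "0 < q" "q < 1" unfolding q_def using Pp Psp PsP by auto
  have "\<rho>0 * s < \<rho>0 * r" using s1 assms by (intro mult_strict_left_mono) auto
  then have as1: "\<rho>0 * s < 1" using assms unfolding r_def by linarith
  have as0: "\<rho>0 * s > 0" using s1 assms by simp
  have Wd: "W L n = P ^ L * (hr r n / r) + FE \<sigma> L (er r) (int n)" for L n
    unfolding W_def P_def r_def using W_decomp[OF r1] by simp
  have FEb: "\<bar>FE \<sigma> L (er r) (int n) / P ^ L\<bar> \<le> 2 * s ^ n * q ^ L" for L n
  proof -
    have "\<bar>FE \<sigma> L (er r) (int n)\<bar> \<le> 2 * Ps ^ L * s ^ n"
      unfolding Ps_def using FE_er_bound[OF r1' s1(1)] assms(1) by simp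
    then have "\<bar>FE \<sigma> L (er r) (int n)\<bar> / P ^ L \<le> 2 * Ps ^ L * s ^ n / P ^ L"
      using Pp by (intro divide_right_mono) auto
    also have "\<dots> = 2 * s ^ n * q ^ L" unfolding q_def by (simp add: power_divide)
    finally show ?thesis using Pp by simp
  qed
  have qL: "(\<lambda>L. q ^ L) \<longlonglongrightarrow> 0" using q01 by (intro LIMSEQ_power_zero) auto
  have Hr_sums: "(\<lambda>n. \<rho>0 ^ n * hr r n) sums Hr \<rho>0 r"
    using H_sums[of \<rho>0 r] assms r1' unfolding r_def by auto
  show ?thesis
  proof (rule main_reduction[where c = "\<lambda>L. P ^ L" and \<kappa> = "1 / r"])
    show "summable (\<lambda>n. \<rho>0 ^ n * Wb \<sigma> (\<lambda>n. \<rho>1 ^ n) L n)" for L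
      using assms by (intro W_summable) (auto simp: max_def)
    show "eventually (\<lambda>L. P ^ L > 0) sequentially" using Pp by simp
    show "1 / r > 0" using r1' by simp
    show "(\<lambda>L. Wb \<sigma> (\<lambda>n. \<rho>1 ^ n) L n / P ^ L) \<longlonglongrightarrow> 1 / r * hr (max 1 \<rho>1) n" for n
    proof -
      have "(\<lambda>L. FE \<sigma> L (er r) (int n) / P ^ L) \<longlonglongrightarrow> 0"
      proof (rule Lim_null_comparison)
        show "eventually (\<lambda>L. norm (FE \<sigma> L (er r) (int n) / P ^ L) \<le> 2 * s ^ n * q ^ L) sequentially"
          using FEb by simp
        show "(\<lambda>L. 2 * s ^ n * q ^ L) \<longlonglongrightarrow> 0"
          using tendsto_mult_right_zero[OF qL, of "2 * s ^ n"] by simp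
      qed
      then have "(\<lambda>L. hr r n / r + FE \<sigma> L (er r) (int n) / P ^ L) \<longlonglongrightarrow> hr r n / r + 0"
        by (intro tendsto_add tendsto_const)
      moreover have "hr r n / r + FE \<sigma> L (er r) (int n) / P ^ L = W L n / P ^ L" for L
        using Pp unfolding Wd by (simp add: field_simps)
      ultimately show ?thesis unfolding mx W_def by simp
    qed
    show "(\<lambda>L. P ^ Suc L / P ^ L) \<longlonglongrightarrow> max 1 \<rho>1 + 1 / max 1 \<rho>1 + \<sigma>"
      using Pp unfolding mx P_def[symmetric] by simp
    show "(\<lambda>L. (\<Sum>n. \<rho>0 ^ n * Wb \<sigma> (\<lambda>n. \<rho>1 ^ n) L n) / P ^ L) \<longlonglongrightarrow> 1 / r * Hr \<rho>0 (max 1 \<rho>1)"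
    proof -
      define g where "g = (\<lambda>L n. \<rho>0 ^ n * (FE \<sigma> L (er r) (int n) / P ^ L))"
      have gb: "norm (g L n) \<le> 2 * q ^ L * (\<rho>0 * s) ^ n" for L n
      proof -
        have "norm (g L n) = \<rho>0 ^ n * \<bar>FE \<sigma> L (er r) (int n) / P ^ L\<bar>"
          unfolding g_def using assms by (simp add: abs_mult)
        also have "\<dots> \<le> \<rho>0 ^ n * (2 * s ^ n * q ^ L)"
          using FEb assms by (intro mult_left_mono) auto
        also have "\<dots> = 2 * q ^ L * (\<rho>0 * s) ^ n" by (simp add: power_mult_distrib)
        finally show ?thesis .
      qed
      have gs: "summable (\<lambda>n. 2 * q ^ L * (\<rho>0 * s) ^ n)" for L
        using as1 as0 by (intro summable_mult summable_geometric) auto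
      have gsum: "summable (g L)" for L
        by (rule summable_comparison_test'[OF gs gb])
      have gbound: "\<bar>suminf (g L)\<bar> \<le> 2 * q ^ L * (1 / (1 - \<rho>0 * s))" for L
      proof -
        have "norm (suminf (g L)) \<le> (\<Sum>n. 2 * q ^ L * (\<rho>0 * s) ^ n)"
          by (rule norm_suminf_le[OF gb gs])
        also have "\<dots> = 2 * q ^ L * (1 / (1 - \<rho>0 * s))"
          using as1 as0 by (subst suminf_mult) (auto simp: suminf_geometric)
        finally show ?thesis by simp
      qed
      have glim: "(\<lambda>L. suminf (g L)) \<longlonglongrightarrow> 0"
      proof (rule Lim_null_comparison)
        show "eventually (\<lambda>L. norm (suminf (g L)) \<le> 2 * q ^ L * (1 / (1 - \<rho>0 * s))) sequentially"
          using gbound by simp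
        show "(\<lambda>L. 2 * q ^ L * (1 / (1 - \<rho>0 * s))) \<longlonglongrightarrow> 0"
          using tendsto_mult_left_zero[OF tendsto_mult_right_zero[OF qL, of 2], of "1 / (1 - \<rho>0 * s)"] by simp
      qed
      have eq: "(\<Sum>n. \<rho>0 ^ n * W L n) / P ^ L = Hr \<rho>0 r / r + suminf (g L)" for L
      proof -
        have "(\<lambda>n. \<rho>0 ^ n * W L n) sums (\<Sum>n. \<rho>0 ^ n * W L n)"
          using assms unfolding W_def by (intro summable_sums W_summable) (auto simp: max_def)
        then have a: "(\<lambda>n. \<rho>0 ^ n * W L n / P ^ L) sums ((\<Sum>n. \<rho>0 ^ n * W L n) / P ^ L)"
          by (rule sums_divide)
        have b: "(\<lambda>n. \<rho>0 ^ n * hr r n / r + g L n) sums (Hr \<rho>0 r / r + suminf (g L))"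
          by (intro sums_add sums_divide Hr_sums summable_sums gsum)
        have "(\<lambda>n. \<rho>0 ^ n * W L n / P ^ L) = (\<lambda>n. \<rho>0 ^ n * hr r n / r + g L n)"
          unfolding g_def Wd using Pp by (simp add: fun_eq_iff field_simps)
        then show ?thesis using a b sums_unique2 by metis
      qed
      have "(\<lambda>L. Hr \<rho>0 r / r + suminf (g L)) \<longlonglongrightarrow> Hr \<rho>0 r / r + 0"
        by (intro tendsto_add tendsto_const glim)
      then show ?thesis unfolding mx using eq unfolding W_def by simp
    qed
  qed (use assms in auto)
qed



lemma int_cos:
  fixes k :: int
  shows "integral {0..pi} (\<lambda>\<theta>. cos (real_of_int k * \<theta>)) = (if k = 0 then pi else 0)"
proof (cases "k = 0")
  case True then show ?thesis by simp
next
  case False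
  have "((\<lambda>\<theta>. cos (real_of_int k * \<theta>)) has_integral
      (sin (real_of_int k * pi) / real_of_int k - sin (real_of_int k * 0) / real_of_int k)) {0..pi}"
  proof (rule fundamental_theorem_of_calculus)
    fix x :: real
    have "((\<lambda>\<theta>. sin (real_of_int k * \<theta>) / real_of_int k) has_real_derivative cos (real_of_int k * x)) (at x within {0..pi})"
      using False by (auto intro!: derivative_eq_intros)
    then show "((\<lambda>\<theta>. sin (real_of_int k * \<theta>) / real_of_int k) has_vector_derivative cos (real_of_int k * x)) (at x within {0..pi})"
      by (simp add: has_real_derivative_iff_has_vector_derivative)
  qed simp
  moreover have "sin (real_of_int k * pi) = 0" by (simp add: sin_times_pi_eq_0)
  ultimately show ?thesis using False by (simp add: integral_unique)
qed

definition u :: "nat \<Rightarrow> real \<Rightarrow> real" where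
  "u n \<theta> = (\<Sum>j\<le>n. cos ((real n - 2 * real j) * \<theta>))"

lemma u_cont: "continuous_on S (u n)"
  unfolding u_def by (intro continuous_intros)

lemma u_zero: "u n 0 = real n + 1"
  unfolding u_def by simp

lemma u_bound: "\<bar>u n \<theta>\<bar> \<le> real n + 1"
proof -
  have "\<bar>u n \<theta>\<bar> \<le> (\<Sum>j\<le>n. \<bar>cos ((real n - 2 * real j) * \<theta>)\<bar>)"
    unfolding u_def by (rule sum_abs)
  also have "\<dots> \<le> (\<Sum>j\<le>n. 1)" by (intro sum_mono) auto
  finally show ?thesis by simp
qed

lemma u_rec: "2 * cos \<theta> * u n \<theta> = u (Suc n) \<theta> + (if n = 0 then 0 else u (n - 1) \<theta>)"
proof -
  have "2 * cos \<theta> * u n \<theta> = (\<Sum>j\<le>n. cos ((real (Suc n) - 2 * real j) * \<theta>)) +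
      (\<Sum>j\<le>n. cos ((real n - 1 - 2 * real j) * \<theta>))"
    unfolding u_def sum_distrib_left sum.distrib[symmetric]
  proof (intro sum.cong refl)
    fix j
    have "2 * cos \<theta> * cos ((real n - 2 * real j) * \<theta>) =
        cos ((real n - 2 * real j) * \<theta> + \<theta>) + cos ((real n - 2 * real j) * \<theta> - \<theta>)"
      by (simp add: cos_add cos_diff)
    also have "\<dots> = cos ((real (Suc n) - 2 * real j) * \<theta>) + cos ((real n - 1 - 2 * real j) * \<theta>)"
      by (simp add: algebra_simps)
    finally show "2 * cos \<theta> * cos ((real n - 2 * real j) * \<theta>) =
        cos ((real (Suc n) - 2 * real j) * \<theta>) + cos ((real n - 1 - 2 * real j) * \<theta>)" .
  qed
  also have "(\<Sum>j\<le>n. cos ((real (Suc n) - 2 * real j) * \<theta>)) = u (Suc n) \<theta> - cos ((- real (Suc n)) * \<theta>)"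
    unfolding u_def by (simp add: algebra_simps)
  also have "(\<Sum>j\<le>n. cos ((real n - 1 - 2 * real j) * \<theta>)) = (if n = 0 then 0 else u (n - 1) \<theta>) + cos ((- real (Suc n)) * \<theta>)"
  proof (cases n)
    case 0 then show ?thesis by (simp add: algebra_simps)
  next
    case (Suc k)
    have "(\<Sum>j\<le>n. cos ((real n - 1 - 2 * real j) * \<theta>)) = (\<Sum>j\<le>k. cos ((real k - 2 * real j) * \<theta>)) +
        cos ((real n - 1 - 2 * real n) * \<theta>)"
      using Suc by (simp add: algebra_simps)
    then show ?thesis using Suc unfolding u_def by (simp add: algebra_simps)
  qed
  finally show ?thesis by simp
qed

lemma u_sin: "sin \<theta> * u n \<theta> = sin ((real n + 1) * \<theta>)"
proof -
  have "2 * sin \<theta> * u n \<theta> = (\<Sum>j\<le>n. sin ((real n + 1 - 2 * real j) * \<theta>) - sin ((real n + 1 - 2 * real (Suc j)) * \<theta>))"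
    unfolding u_def sum_distrib_left
  proof (intro sum.cong refl)
    fix j
    have "2 * sin \<theta> * cos ((real n - 2 * real j) * \<theta>) =
        sin ((real n - 2 * real j) * \<theta> + \<theta>) - sin ((real n - 2 * real j) * \<theta> - \<theta>)"
      by (simp add: sin_add sin_diff)
    also have "\<dots> = sin ((real n + 1 - 2 * real j) * \<theta>) - sin ((real n + 1 - 2 * real (Suc j)) * \<theta>)"
      by (simp add: algebra_simps)
    finally show "2 * sin \<theta> * cos ((real n - 2 * real j) * \<theta>) =
        sin ((real n + 1 - 2 * real j) * \<theta>) - sin ((real n + 1 - 2 * real (Suc j)) * \<theta>)" .
  qed
  also have "\<dots> = sin ((real n + 1 - 2 * real 0) * \<theta>) - sin ((real n + 1 - 2 * real (Suc n)) * \<theta>)"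
    by (rule sum_telescope[where f = "\<lambda>j. sin ((real n + 1 - 2 * real j) * \<theta>)"])
  also have "\<dots> = 2 * sin ((real n + 1) * \<theta>)"
  proof -
    have "(real n + 1 - 2 * real (Suc n)) * \<theta> = - ((real n + 1) * \<theta>)" by (simp add: algebra_simps)
    then show ?thesis by simp
  qed
  finally show ?thesis by simp
qed



definition wf :: "real \<Rightarrow> real \<Rightarrow> real" where
  "wf \<sigma> \<theta> = \<sigma> + 2 * cos \<theta>"

lemma wf_cont: "continuous_on S (wf \<sigma>)"
  unfolding wf_def by (intro continuous_intros)

lemma Wb_int:
  assumes cont: "\<And>n. continuous_on {0..pi} (v n)"
    and rec: "\<And>n \<theta>. wf \<sigma> \<theta> * v n \<theta> = \<sigma> * v n \<theta> + v (Suc n) \<theta> + (if n = 0 then 0 else v (n - 1) \<theta>)"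
    and base: "\<And>n. b n = C * integral {0..pi} (v n)"
  shows "Wb \<sigma> b L n = C * integral {0..pi} (\<lambda>\<theta>. wf \<sigma> \<theta> ^ L * v n \<theta>)"
proof (induction L arbitrary: n)
  case 0 then show ?case using base by simp
next
  case (Suc L)
  have ii: "(\<lambda>\<theta>. wf \<sigma> \<theta> ^ L * v k \<theta>) integrable_on {0..pi}" for k
    by (intro integrable_continuous_interval continuous_intros cont wf_cont)
  have ii2: "(\<lambda>\<theta>. \<sigma> * (wf \<sigma> \<theta> ^ L * v k \<theta>)) integrable_on {0..pi}" for k
    by (intro integrable_continuous_interval continuous_intros cont wf_cont)
  have pt: "wf \<sigma> \<theta> ^ Suc L * v n \<theta> = \<sigma> * (wf \<sigma> \<theta> ^ L * v n \<theta>) + wf \<sigma> \<theta> ^ L * v (Suc n) \<theta> +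
      (if n = 0 then 0 else wf \<sigma> \<theta> ^ L * v (n - 1) \<theta>)" for \<theta>
  proof -
    have "wf \<sigma> \<theta> ^ Suc L * v n \<theta> = wf \<sigma> \<theta> ^ L * (wf \<sigma> \<theta> * v n \<theta>)" by simp
    also have "\<dots> = \<sigma> * (wf \<sigma> \<theta> ^ L * v n \<theta>) + wf \<sigma> \<theta> ^ L * v (Suc n) \<theta> +
      (if n = 0 then 0 else wf \<sigma> \<theta> ^ L * v (n - 1) \<theta>)"
      unfolding rec by (simp add: algebra_simps)
    finally show ?thesis .
  qed
  show ?case
  proof (cases "n = 0")
    case True
    have "integral {0..pi} (\<lambda>\<theta>. wf \<sigma> \<theta> ^ Suc L * v n \<theta>) =
       integral {0..pi} (\<lambda>\<theta>. \<sigma> * (wf \<sigma> \<theta> ^ L * v n \<theta>) + wf \<sigma> \<theta> ^ L * v (Suc n) \<theta>)"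
      unfolding pt using True by simp
    also have "\<dots> = \<sigma> * integral {0..pi} (\<lambda>\<theta>. wf \<sigma> \<theta> ^ L * v n \<theta>) + integral {0..pi} (\<lambda>\<theta>. wf \<sigma> \<theta> ^ L * v (Suc n) \<theta>)"
      by (subst integral_add[OF ii2 ii]) simp
    finally show ?thesis using True Suc.IH by (simp add: algebra_simps)
  next
    case False
    have "integral {0..pi} (\<lambda>\<theta>. wf \<sigma> \<theta> ^ Suc L * v n \<theta>) =
       integral {0..pi} (\<lambda>\<theta>. (\<sigma> * (wf \<sigma> \<theta> ^ L * v n \<theta>) + wf \<sigma> \<theta> ^ L * v (Suc n) \<theta>) + wf \<sigma> \<theta> ^ L * v (n - 1) \<theta>)"
      unfolding pt using False by simp
    also have "\<dots> = \<sigma> * integral {0..pi} (\<lambda>\<theta>. wf \<sigma> \<theta> ^ L * v n \<theta>) + integral {0..pi} (\<lambda>\<theta>. wf \<sigma> \<theta> ^ L * v (Suc n) \<theta>)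
        + integral {0..pi} (\<lambda>\<theta>. wf \<sigma> \<theta> ^ L * v (n - 1) \<theta>)"
      by (subst integral_add[OF integrable_add[OF ii2 ii] ii], subst integral_add[OF ii2 ii]) simp
    finally show ?thesis using False Suc.IH by (simp add: algebra_simps)
  qed
qed

lemma int_sin_sin:
  "integral {0..pi} (\<lambda>\<theta>. sin ((real n + 1) * \<theta>) * sin ((real m + 1) * \<theta>)) = (if n = m then pi / 2 else 0)"
proof -
  have pt: "sin ((real n + 1) * \<theta>) * sin ((real m + 1) * \<theta>) =
     cos (real_of_int (int n - int m) * \<theta>) / 2 - cos (real_of_int (int n + int m + 2) * \<theta>) / 2" for \<theta>
  proof -
    have a: "real_of_int (int n - int m) * \<theta> = (real n + 1) * \<theta> - (real m + 1) * \<theta>" by (simp add: algebra_simps)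
    have b: "real_of_int (int n + int m + 2) * \<theta> = (real n + 1) * \<theta> + (real m + 1) * \<theta>" by (simp add: algebra_simps)
    have g: "sin A * sin B = cos (A - B) / 2 - cos (A + B) / 2" for A B :: real
      by (simp add: cos_add cos_diff field_simps)
    show ?thesis unfolding a b by (rule g)
  qed
  have i1: "(\<lambda>\<theta>. cos (real_of_int k * \<theta>) / 2) integrable_on {0..pi}" for k
    by (intro integrable_continuous_interval continuous_intros) auto
  have "integral {0..pi} (\<lambda>\<theta>. sin ((real n + 1) * \<theta>) * sin ((real m + 1) * \<theta>)) =
     integral {0..pi} (\<lambda>\<theta>. cos (real_of_int (int n - int m) * \<theta>) / 2) - integral {0..pi} (\<lambda>\<theta>. cos (real_of_int (int n + int m + 2) * \<theta>) / 2)"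
    unfolding pt by (rule integral_diff[OF i1 i1])
  also have "\<dots> = (if n = m then pi / 2 else 0)"
  proof -
    have h: "integral {0..pi} (\<lambda>\<theta>. cos (real_of_int k * \<theta>) / 2) = (if k = 0 then pi else 0) / 2" for k
    proof -
      have "integral {0..pi} (\<lambda>\<theta>. cos (real_of_int k * \<theta>) / 2) = integral {0..pi} (\<lambda>\<theta>. cos (real_of_int k * \<theta>)) / 2"
        by simp
      then show ?thesis by (simp only: int_cos)
    qed
    show ?thesis unfolding h by simp
  qed
  finally show ?thesis .
qed

lemma t_repr:
  "Wb \<sigma> (\<lambda>n. if n = m then 1 else 0) L n =
     2 / pi * integral {0..pi} (\<lambda>\<theta>. wf \<sigma> \<theta> ^ L * (sin \<theta> ^ 2 * u n \<theta> * u m \<theta>))"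
proof (rule Wb_int)
  show "continuous_on {0..pi} (\<lambda>\<theta>. sin \<theta> ^ 2 * u n \<theta> * u m \<theta>)" for n
    by (intro continuous_intros u_cont)
  show "wf \<sigma> \<theta> * (sin \<theta> ^ 2 * u n \<theta> * u m \<theta>) = \<sigma> * (sin \<theta> ^ 2 * u n \<theta> * u m \<theta>) + sin \<theta> ^ 2 * u (Suc n) \<theta> * u m \<theta> +
      (if n = 0 then 0 else sin \<theta> ^ 2 * u (n - 1) \<theta> * u m \<theta>)" for n \<theta>
  proof -
    have "wf \<sigma> \<theta> * (sin \<theta> ^ 2 * u n \<theta> * u m \<theta>) = sin \<theta> ^ 2 * u m \<theta> * (\<sigma> * u n \<theta> + 2 * cos \<theta> * u n \<theta>)"
      unfolding wf_def by (simp add: algebra_simps)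
    then show ?thesis unfolding u_rec by (auto simp: algebra_simps)
  qed
  show "(if n = m then 1 else 0) = 2 / pi * integral {0..pi} (\<lambda>\<theta>. sin \<theta> ^ 2 * u n \<theta> * u m \<theta>)" for n
  proof -
    have "(\<lambda>\<theta>. sin \<theta> ^ 2 * u n \<theta> * u m \<theta>) = (\<lambda>\<theta>. sin ((real n + 1) * \<theta>) * sin ((real m + 1) * \<theta>))"
    proof
      fix \<theta>
      have "sin \<theta> ^ 2 * u n \<theta> * u m \<theta> = (sin \<theta> * u n \<theta>) * (sin \<theta> * u m \<theta>)"
        by (simp add: power2_eq_square algebra_simps)
      then show "sin \<theta> ^ 2 * u n \<theta> * u m \<theta> = sin ((real n + 1) * \<theta>) * sin ((real m + 1) * \<theta>)"
        unfolding u_sin .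
    qed
    then show ?thesis by (simp add: int_sin_sin)
  qed
qed

lemma int_u: "integral {0..pi} (u n) = (if even n then pi else 0)"
proof -
  have i: "(\<lambda>\<theta>. cos ((real n - 2 * real j) * \<theta>)) integrable_on {0..pi}" for j
    by (intro integrable_continuous_interval continuous_intros)
  have "integral {0..pi} (u n) = (\<Sum>j\<le>n. integral {0..pi} (\<lambda>\<theta>. cos ((real n - 2 * real j) * \<theta>)))"
    unfolding u_def by (rule integral_sum) (auto intro: i)
  also have "\<dots> = (\<Sum>j\<le>n. if n = 2 * j then pi else 0)"
  proof (intro sum.cong refl)
    fix j
    have "real n - 2 * real j = real_of_int (int n - 2 * int j)" by simp
    then show "integral {0..pi} (\<lambda>\<theta>. cos ((real n - 2 * real j) * \<theta>)) = (if n = 2 * j then pi else 0)"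
      using int_cos[of "int n - 2 * int j"] by simp
  qed
  also have "\<dots> = (if even n then pi else 0)"
  proof (cases "even n")
    case True
    then obtain k where k: "n = 2 * k" by auto
    have "(\<Sum>j\<le>n. if n = 2 * j then pi else 0) = (\<Sum>j\<le>n. if j = k then pi else 0)"
      using k by (intro sum.cong) auto
    also have "\<dots> = pi" using k by simp
    finally show ?thesis using True by simp
  next
    case False
    then show ?thesis by (intro trans[OF sum.neutral]) auto
  qed
  finally show ?thesis .
qed

lemma int_cos_u: "integral {0..pi} (\<lambda>\<theta>. cos \<theta> * u n \<theta>) = (if even n then 0 else pi)"
proof -
  have i: "u k integrable_on {0..pi}" for k by (intro integrable_continuous_interval u_cont)
  have "(\<lambda>\<theta>. cos \<theta> * u n \<theta>) = (\<lambda>\<theta>. (1/2) * (u (Suc n) \<theta> + (if n = 0 then 0 else u (n - 1) \<theta>)))"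
    using u_rec[of _ n] by (simp add: fun_eq_iff field_simps)
  then have "integral {0..pi} (\<lambda>\<theta>. cos \<theta> * u n \<theta>) =
      (1/2) * (integral {0..pi} (u (Suc n)) + (if n = 0 then 0 else integral {0..pi} (u (n - 1))))"
    by (cases "n = 0") (simp_all add: integral_add[OF i i])
  then show ?thesis by (cases n) (auto simp: int_u)
qed

lemma W1_repr:
  "Wb \<sigma> (\<lambda>n. 1) L n = 1 / pi * integral {0..pi} (\<lambda>\<theta>. wf \<sigma> \<theta> ^ L * ((1 + cos \<theta>) * u n \<theta>))"
proof (rule Wb_int)
  show "continuous_on {0..pi} (\<lambda>\<theta>. (1 + cos \<theta>) * u n \<theta>)" for n
    by (intro continuous_intros u_cont)
  show "wf \<sigma> \<theta> * ((1 + cos \<theta>) * u n \<theta>) = \<sigma> * ((1 + cos \<theta>) * u n \<theta>) + (1 + cos \<theta>) * u (Suc n) \<theta> +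
      (if n = 0 then 0 else (1 + cos \<theta>) * u (n - 1) \<theta>)" for n \<theta>
  proof -
    have "wf \<sigma> \<theta> * ((1 + cos \<theta>) * u n \<theta>) = (1 + cos \<theta>) * (\<sigma> * u n \<theta> + 2 * cos \<theta> * u n \<theta>)"
      unfolding wf_def by (simp add: algebra_simps)
    then show ?thesis unfolding u_rec by (auto simp: algebra_simps)
  qed
  show "1 = 1 / pi * integral {0..pi} (\<lambda>\<theta>. (1 + cos \<theta>) * u n \<theta>)" for n
  proof -
    have i1: "u n integrable_on {0..pi}" by (intro integrable_continuous_interval u_cont)
    have i2: "(\<lambda>\<theta>. cos \<theta> * u n \<theta>) integrable_on {0..pi}"
      by (intro integrable_continuous_interval continuous_intros u_cont)
    have "integral {0..pi} (\<lambda>\<theta>. (1 + cos \<theta>) * u n \<theta>) = integral {0..pi} (\<lambda>\<theta>. u n \<theta> + cos \<theta> * u n \<theta>)"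
      by (simp add: algebra_simps)
    also have "\<dots> = pi" by (subst integral_add[OF i1 i2]) (simp add: int_u int_cos_u)
    finally show ?thesis by simp
  qed
qed



lemma int_abs_le:
  fixes f :: "real \<Rightarrow> real"
  assumes "a \<le> b" "continuous_on {a..b} f" "\<And>x. x \<in> {a..b} \<Longrightarrow> \<bar>f x\<bar> \<le> K"
  shows "\<bar>integral {a..b} f\<bar> \<le> (b - a) * K"
proof -
  have "norm (integral {a..b} f) \<le> integral {a..b} (\<lambda>x. K)"
    using assms by (intro integral_norm_bound_integral integrable_continuous_interval) auto
  then show ?thesis using assms(1) by simp
qed

lemma int_ge_const:
  fixes f :: "real \<Rightarrow> real"
  assumes "a \<le> b" "continuous_on {a..b} f" "\<And>x. x \<in> {a..b} \<Longrightarrow> K \<le> f x"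
  shows "(b - a) * K \<le> integral {a..b} f"
proof -
  have "integral {a..b} (\<lambda>x. K) \<le> integral {a..b} f"
    using assms by (intro integral_le integrable_continuous_interval) auto
  then show ?thesis using assms(1) by simp
qed

lemma int_split:
  fixes f :: "real \<Rightarrow> real"
  assumes "0 \<le> d" "d \<le> pi" "continuous_on {0..pi} f"
  shows "integral {0..pi} f = integral {0..d} f + integral {d..pi} f"
  using Henstock_Kurzweil_Integration.integral_combine[OF assms(1,2) integrable_continuous_interval[OF assms(3)]] by simp

lemma conc:
  fixes \<sigma> \<epsilon> :: real and p g :: "real \<Rightarrow> real"
  assumes \<sigma>: "\<sigma> > 0"
    and pc: "continuous_on {0..pi} p" and gc: "continuous_on {0..pi} g"
    and p0: "\<And>\<theta>. \<theta> \<in> {0..pi} \<Longrightarrow> p \<theta> \<ge> 0"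
    and ppos: "\<And>\<theta>. \<theta> \<in> {0<..<pi} \<Longrightarrow> p \<theta> > 0"
    and \<epsilon>: "\<epsilon> > 0"
  shows "eventually (\<lambda>L. integral {0..pi} (\<lambda>\<theta>. wf \<sigma> \<theta> ^ L * p \<theta>) > 0 \<and>
      \<bar>integral {0..pi} (\<lambda>\<theta>. wf \<sigma> \<theta> ^ L * (p \<theta> * g \<theta>)) - g 0 * integral {0..pi} (\<lambda>\<theta>. wf \<sigma> \<theta> ^ L * p \<theta>)\<bar>
         \<le> \<epsilon> * integral {0..pi} (\<lambda>\<theta>. wf \<sigma> \<theta> ^ L * p \<theta>) \<and>
      integral {0..pi} (\<lambda>\<theta>. \<bar>wf \<sigma> \<theta>\<bar> ^ L * p \<theta>) \<le> 3 * integral {0..pi} (\<lambda>\<theta>. wf \<sigma> \<theta> ^ L * p \<theta>)) sequentially"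
proof -
  have wc: "continuous_on S (wf \<sigma>)" for S by (rule wf_cont)
  obtain Bp where Bp: "Bp > 0" "\<And>\<theta>. \<theta> \<in> {0..pi} \<Longrightarrow> \<bar>p \<theta>\<bar> \<le> Bp"
    using compact_imp_bounded[OF compact_continuous_image[OF pc compact_Icc]]
    unfolding bounded_pos by auto
  obtain Bg where Bg: "Bg > 0" "\<And>\<theta>. \<theta> \<in> {0..pi} \<Longrightarrow> \<bar>g \<theta>\<bar> \<le> Bg"
    using compact_imp_bounded[OF compact_continuous_image[OF gc compact_Icc]]
    unfolding bounded_pos by auto
  define B where "B = max Bp Bg"
  have B: "B > 0" "\<And>\<theta>. \<theta> \<in> {0..pi} \<Longrightarrow> \<bar>p \<theta>\<bar> \<le> B" "\<And>\<theta>. \<theta> \<in> {0..pi} \<Longrightarrow> \<bar>g \<theta>\<bar> \<le> B"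
    using Bp Bg unfolding B_def by (auto simp: le_max_iff_disj)
  obtain d1 where d1: "d1 > 0" "\<And>\<theta>. \<theta> \<in> {0..pi} \<Longrightarrow> \<theta> < d1 \<Longrightarrow> \<bar>g \<theta> - g 0\<bar> < \<epsilon> / 4"
  proof -
    have "0 \<in> {0..pi::real}" by simp
    from gc[unfolded continuous_on_iff, rule_format, OF this, of "\<epsilon> / 4"] \<epsilon>
    obtain d where "d > 0" "\<forall>x'\<in>{0..pi}. dist x' 0 < d \<longrightarrow> dist (g x') (g 0) < \<epsilon> / 4" by auto
    then show ?thesis using that[of d] by (auto simp: dist_real_def)
  qed
  obtain d2 where d2: "d2 > 0" "\<And>\<theta>. \<theta> \<in> {0..pi} \<Longrightarrow> \<theta> < d2 \<Longrightarrow> \<bar>cos \<theta> - 1\<bar> < \<sigma>"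
  proof -
    have "0 \<in> {0..pi::real}" by simp
    have cc: "continuous_on {0..pi} cos" by (intro continuous_intros)
    from cc[unfolded continuous_on_iff, rule_format, OF \<open>0 \<in> {0..pi}\<close>, of \<sigma>] \<sigma>
    obtain d where "d > 0" "\<forall>x'\<in>{0..pi}. dist x' 0 < d \<longrightarrow> dist (cos x') (cos 0) < \<sigma>" by auto
    then show ?thesis using that[of d] by (auto simp: dist_real_def)
  qed
  define \<delta> where "\<delta> = min (pi / 2) (min d1 d2 / 2)"
  have \<delta>: "\<delta> > 0" "\<delta> \<le> pi / 2" "\<delta> < d1" "\<delta> < d2"
    unfolding \<delta>_def using d1 d2 pi_gt_zero by auto
  have \<delta>pi: "\<delta> < pi" using \<delta> pi_gt_zero by linarith
  have F1: "\<bar>g \<theta> - g 0\<bar> \<le> \<epsilon> / 4" if "\<theta> \<in> {0..\<delta>}" for \<theta>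
    using d1(2)[of \<theta>] that \<delta> \<delta>pi by auto
  have F2: "cos \<delta> \<ge> 1 - \<sigma>" using d2(2)[of \<delta>] \<delta> \<delta>pi by auto
  have cd0: "cos \<delta> \<ge> 0" using \<delta> by (intro cos_ge_zero) auto
  define M where "M = wf \<sigma> \<delta>"
  define M2 where "M2 = wf \<sigma> (\<delta> / 2)"
  have Mpos: "M > 0" unfolding M_def wf_def using cd0 \<sigma> by simp
  have MM2: "M < M2" unfolding M_def M2_def wf_def using \<delta> \<delta>pi
    by (simp add: cos_monotone_0_pi)
  have F3: "\<bar>wf \<sigma> \<theta>\<bar> \<le> M" if "\<theta> \<in> {\<delta>..pi}" for \<theta>
  proof -
    have "cos \<theta> \<le> cos \<delta>" using that \<delta> by (intro cos_monotone_0_pi_le) auto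
    moreover have "cos \<theta> \<ge> -1" by simp
    ultimately show ?thesis unfolding M_def wf_def abs_le_iff using F2 \<sigma> by linarith
  qed
  have F4: "wf \<sigma> \<theta> \<ge> M" if "\<theta> \<in> {0..\<delta>}" for \<theta>
  proof -
    have "cos \<delta> \<le> cos \<theta>" using that \<delta> \<delta>pi by (intro cos_monotone_0_pi_le) auto
    then show ?thesis unfolding M_def wf_def by simp
  qed
  have F5: "wf \<sigma> \<theta> \<ge> M2" if "\<theta> \<in> {\<delta>/4..\<delta>/2}" for \<theta>
  proof -
    have "cos (\<delta> / 2) \<le> cos \<theta>" using that \<delta> \<delta>pi by (intro cos_monotone_0_pi_le) auto
    then show ?thesis unfolding M2_def wf_def by simp
  qed
  obtain c where c: "c > 0" "\<And>\<theta>. \<theta> \<in> {\<delta>/4..\<delta>/2} \<Longrightarrow> c \<le> p \<theta>"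
  proof -
    have "{\<delta>/4..\<delta>/2} \<subseteq> {0..pi}" using \<delta> \<delta>pi by auto
    then have "continuous_on {\<delta>/4..\<delta>/2} p" using pc continuous_on_subset by blast
    then obtain x where x: "x \<in> {\<delta>/4..\<delta>/2}" "\<And>y. y \<in> {\<delta>/4..\<delta>/2} \<Longrightarrow> p x \<le> p y"
      using continuous_attains_inf[of "{\<delta>/4..\<delta>/2}" p] \<delta> by auto
    have "x \<in> {0<..<pi}" using x(1) \<delta> \<delta>pi by auto
    then have "p x > 0" by (rule ppos)
    then show ?thesis using that[of "p x"] x by auto
  qed
  define A where "A = (\<lambda>L. integral {0..\<delta>} (\<lambda>\<theta>. wf \<sigma> \<theta> ^ L * p \<theta>))"
  have Alow: "A L \<ge> (\<delta> / 4) * c * M2 ^ L" for L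
  proof -
    have "(\<delta> / 2 - \<delta> / 4) * (M2 ^ L * c) \<le> integral {\<delta>/4..\<delta>/2} (\<lambda>\<theta>. wf \<sigma> \<theta> ^ L * p \<theta>)"
    proof (rule int_ge_const)
      show "continuous_on {\<delta> / 4..\<delta> / 2} (\<lambda>\<theta>. wf \<sigma> \<theta> ^ L * p \<theta>)"
        using pc \<delta> \<delta>pi by (intro continuous_intros wc) (auto intro: continuous_on_subset)
      fix \<theta> assume th: "\<theta> \<in> {\<delta> / 4..\<delta> / 2}"
      have "M2 ^ L \<le> wf \<sigma> \<theta> ^ L" using F5[OF th] MM2 Mpos by (intro power_mono) auto
      moreover have "0 \<le> wf \<sigma> \<theta> ^ L" using F5[OF th] MM2 Mpos by simp
      ultimately show "M2 ^ L * c \<le> wf \<sigma> \<theta> ^ L * p \<theta>"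
        using c th MM2 Mpos by (intro mult_mono) auto
    qed (use \<delta> in auto)
    also have "\<dots> \<le> A L" unfolding A_def
    proof (rule integral_subset_le)
      show "{\<delta> / 4..\<delta> / 2} \<subseteq> {0..\<delta>}" using \<delta> by auto
      show "(\<lambda>\<theta>. wf \<sigma> \<theta> ^ L * p \<theta>) integrable_on {\<delta> / 4..\<delta> / 2}"
        using pc \<delta> \<delta>pi by (intro integrable_continuous_interval continuous_intros wc) (auto intro: continuous_on_subset)
      show "(\<lambda>\<theta>. wf \<sigma> \<theta> ^ L * p \<theta>) integrable_on {0..\<delta>}"
        using pc \<delta> \<delta>pi by (intro integrable_continuous_interval continuous_intros wc) (auto intro: continuous_on_subset)
      show "\<forall>x\<in>{0..\<delta>}. 0 \<le> wf \<sigma> x ^ L * p x"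
      proof
        fix x assume x: "x \<in> {0..\<delta>}"
        have "wf \<sigma> x > 0" using F4[OF x] Mpos by linarith
        moreover have "p x \<ge> 0" using p0 x \<delta>pi by auto
        ultimately show "0 \<le> wf \<sigma> x ^ L * p x" by simp
      qed
    qed
    finally show ?thesis by (simp add: algebra_simps)
  qed
  define K0 where "K0 = pi * B * (1 + 2 * B)"
  have K0: "K0 > 0" unfolding K0_def using B by simp
  define \<eta> where "\<eta> = min (\<epsilon> / 4) (1 / 2) * (\<delta> / 4 * c) / K0"
  have \<eta>: "\<eta> > 0" unfolding \<eta>_def using \<epsilon> \<delta> c K0 by auto
  have "(\<lambda>L. (M / M2) ^ L) \<longlonglongrightarrow> 0" using Mpos MM2 by (intro LIMSEQ_power_zero) auto
  then have ev: "eventually (\<lambda>L. (M / M2) ^ L < \<eta>) sequentially"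
    using \<eta> by (rule order_tendstoD(2))
  show ?thesis using ev
  proof eventually_elim
    case (elim L)
    have M2p: "M2 > 0" using Mpos MM2 by simp
    have key: "K0 * M ^ L \<le> min (\<epsilon> / 4) (1 / 2) * A L"
    proof -
      have "K0 * M ^ L = K0 * (M / M2) ^ L * M2 ^ L" using M2p by (simp add: power_divide)
      also have "\<dots> \<le> K0 * \<eta> * M2 ^ L" using elim K0 M2p by (intro mult_right_mono mult_left_mono) auto
      also have "\<dots> = min (\<epsilon> / 4) (1 / 2) * ((\<delta> / 4) * c * M2 ^ L)" unfolding \<eta>_def using K0 by simp
      also have "\<dots> \<le> min (\<epsilon> / 4) (1 / 2) * A L" using Alow[of L] \<epsilon> by (intro mult_left_mono) auto
      finally show ?thesis .
    qed
    have "(\<delta> / 4) * c * M2 ^ L > 0" using \<delta> c M2p by simp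
    then have Apos: "A L > 0" using Alow[of L] by linarith
    have Mnn: "M ^ L \<ge> 0" using Mpos by simp
    define f where "f = (\<lambda>\<theta>. wf \<sigma> \<theta> ^ L * (p \<theta> * (g \<theta> - g 0)))"
    have fc: "continuous_on {0..pi} f" unfolding f_def using pc gc by (intro continuous_intros wc)
    have fcs: "continuous_on {a..b} f" if "0 \<le> a" "b \<le> pi" for a b
      by (rule continuous_on_subset[OF fc]) (use that in auto)
    have pwc: "continuous_on {0..pi} (\<lambda>\<theta>. wf \<sigma> \<theta> ^ L * p \<theta>)" using pc by (intro continuous_intros wc)
    have pwcs: "continuous_on {a..b} (\<lambda>\<theta>. wf \<sigma> \<theta> ^ L * p \<theta>)" if "0 \<le> a" "b \<le> pi" for a b
      by (rule continuous_on_subset[OF pwc]) (use that in auto)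
    have awc: "continuous_on {0..pi} (\<lambda>\<theta>. \<bar>wf \<sigma> \<theta>\<bar> ^ L * p \<theta>)" using pc by (intro continuous_intros wc)
    have tf: "\<bar>integral {\<delta>..pi} f\<bar> \<le> K0 * M ^ L"
    proof -
      have "\<bar>integral {\<delta>..pi} f\<bar> \<le> (pi - \<delta>) * (M ^ L * (B * (2 * B)))"
      proof (rule int_abs_le)
        show "continuous_on {\<delta>..pi} f" using \<delta> by (intro fcs) auto
        fix \<theta> assume th: "\<theta> \<in> {\<delta>..pi}"
        then have th0: "\<theta> \<in> {0..pi}" using \<delta> by auto
        have "\<bar>f \<theta>\<bar> = \<bar>wf \<sigma> \<theta>\<bar> ^ L * (\<bar>p \<theta>\<bar> * \<bar>g \<theta> - g 0\<bar>)" unfolding f_def by (simp add: abs_mult power_abs)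
        also have "\<dots> \<le> M ^ L * (B * (2 * B))"
        proof (intro mult_mono power_mono)
          show "\<bar>g \<theta> - g 0\<bar> \<le> 2 * B" using B(3)[OF th0] B(3)[of 0] by auto
        qed (use F3[OF th] B(2)[OF th0] B(1) in auto)
        finally show "\<bar>f \<theta>\<bar> \<le> M ^ L * (B * (2 * B))" .
      qed (use \<delta>pi in auto)
      also have "\<dots> \<le> K0 * M ^ L"
      proof -
        have X: "M ^ L * (B * (2 * B)) \<ge> 0" using Mnn B by simp
        have "(pi - \<delta>) * (M ^ L * (B * (2 * B))) \<le> pi * (M ^ L * (B * (2 * B)))"
          using \<delta> X by (intro mult_right_mono) auto
        also have "\<dots> \<le> pi * (M ^ L * (B * (1 + 2 * B)))"
          using Mnn B by (intro mult_left_mono) auto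
        finally show ?thesis unfolding K0_def by (simp add: algebra_simps)
      qed
      finally show ?thesis .
    qed
    have hf: "\<bar>integral {0..\<delta>} f\<bar> \<le> \<epsilon> / 4 * A L"
    proof -
      have "norm (integral {0..\<delta>} f) \<le> integral {0..\<delta>} (\<lambda>\<theta>. \<epsilon> / 4 * (wf \<sigma> \<theta> ^ L * p \<theta>))"
      proof (rule integral_norm_bound_integral)
        show "f integrable_on {0..\<delta>}" using \<delta> \<delta>pi by (intro integrable_continuous_interval fcs) auto
        show "(\<lambda>\<theta>. \<epsilon> / 4 * (wf \<sigma> \<theta> ^ L * p \<theta>)) integrable_on {0..\<delta>}"
          using \<delta> \<delta>pi pc by (intro integrable_continuous_interval continuous_intros wc) (auto intro: continuous_on_subset)
        fix \<theta> assume th: "\<theta> \<in> {0..\<delta>}"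
        then have th0: "\<theta> \<in> {0..pi}" using \<delta>pi by auto
        have wp: "wf \<sigma> \<theta> ^ L * p \<theta> \<ge> 0" using F4[OF th] Mpos p0[OF th0] by simp
        have "f \<theta> = (wf \<sigma> \<theta> ^ L * p \<theta>) * (g \<theta> - g 0)" unfolding f_def by (simp add: algebra_simps)
        then have "norm (f \<theta>) = \<bar>wf \<sigma> \<theta> ^ L * p \<theta>\<bar> * \<bar>g \<theta> - g 0\<bar>" by (simp only: real_norm_def abs_mult)
        then have "norm (f \<theta>) = (wf \<sigma> \<theta> ^ L * p \<theta>) * \<bar>g \<theta> - g 0\<bar>" using wp by simp
        also have "\<dots> \<le> (wf \<sigma> \<theta> ^ L * p \<theta>) * (\<epsilon> / 4)" using wp F1[OF th] by (intro mult_left_mono) auto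
        finally show "norm (f \<theta>) \<le> \<epsilon> / 4 * (wf \<sigma> \<theta> ^ L * p \<theta>)" by (simp add: mult.commute)
      qed
      then show ?thesis unfolding A_def by simp
    qed
    have tp: "\<bar>integral {\<delta>..pi} (\<lambda>\<theta>. wf \<sigma> \<theta> ^ L * p \<theta>)\<bar> \<le> K0 * M ^ L"
    proof -
      have "\<bar>integral {\<delta>..pi} (\<lambda>\<theta>. wf \<sigma> \<theta> ^ L * p \<theta>)\<bar> \<le> (pi - \<delta>) * (M ^ L * B)"
      proof (rule int_abs_le)
        show "continuous_on {\<delta>..pi} (\<lambda>\<theta>. wf \<sigma> \<theta> ^ L * p \<theta>)" using \<delta> by (intro pwcs) auto
        fix \<theta> assume th: "\<theta> \<in> {\<delta>..pi}"
        then have th0: "\<theta> \<in> {0..pi}" using \<delta> by auto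
        have "\<bar>wf \<sigma> \<theta> ^ L * p \<theta>\<bar> = \<bar>wf \<sigma> \<theta>\<bar> ^ L * \<bar>p \<theta>\<bar>" by (simp add: abs_mult power_abs)
        also have "\<dots> \<le> M ^ L * B" using F3[OF th] B(2)[OF th0] by (intro mult_mono power_mono) auto
        finally show "\<bar>wf \<sigma> \<theta> ^ L * p \<theta>\<bar> \<le> M ^ L * B" .
      qed (use \<delta>pi in auto)
      also have "\<dots> \<le> K0 * M ^ L"
      proof -
        have X: "M ^ L * B \<ge> 0" using Mnn B by simp
        have "(pi - \<delta>) * (M ^ L * B) \<le> pi * (M ^ L * B)"
          using \<delta> X by (intro mult_right_mono) auto
        also have "\<dots> \<le> pi * (M ^ L * (B * (1 + 2 * B)))"
          using Mnn B by (intro mult_left_mono) auto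
        finally show ?thesis unfolding K0_def by (simp add: algebra_simps)
      qed
      finally show ?thesis .
    qed
    have tap: "\<bar>integral {\<delta>..pi} (\<lambda>\<theta>. \<bar>wf \<sigma> \<theta>\<bar> ^ L * p \<theta>)\<bar> \<le> K0 * M ^ L"
    proof -
      have "\<bar>integral {\<delta>..pi} (\<lambda>\<theta>. \<bar>wf \<sigma> \<theta>\<bar> ^ L * p \<theta>)\<bar> \<le> (pi - \<delta>) * (M ^ L * B)"
      proof (rule int_abs_le)
        show "continuous_on {\<delta>..pi} (\<lambda>\<theta>. \<bar>wf \<sigma> \<theta>\<bar> ^ L * p \<theta>)" by (rule continuous_on_subset[OF awc]) (use \<delta> in auto)
        fix \<theta> assume th: "\<theta> \<in> {\<delta>..pi}"
        then have th0: "\<theta> \<in> {0..pi}" using \<delta> by auto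
        have "\<bar>\<bar>wf \<sigma> \<theta>\<bar> ^ L * p \<theta>\<bar> = \<bar>wf \<sigma> \<theta>\<bar> ^ L * \<bar>p \<theta>\<bar>" by (simp add: abs_mult power_abs)
        also have "\<dots> \<le> M ^ L * B" using F3[OF th] B(2)[OF th0] by (intro mult_mono power_mono) auto
        finally show "\<bar>\<bar>wf \<sigma> \<theta>\<bar> ^ L * p \<theta>\<bar> \<le> M ^ L * B" .
      qed (use \<delta>pi in auto)
      also have "\<dots> \<le> K0 * M ^ L"
      proof -
        have X: "M ^ L * B \<ge> 0" using Mnn B by simp
        have "(pi - \<delta>) * (M ^ L * B) \<le> pi * (M ^ L * B)"
          using \<delta> X by (intro mult_right_mono) auto
        also have "\<dots> \<le> pi * (M ^ L * (B * (1 + 2 * B)))"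
          using Mnn B by (intro mult_left_mono) auto
        finally show ?thesis unfolding K0_def by (simp add: algebra_simps)
      qed
      finally show ?thesis .
    qed
    have Jp: "integral {0..pi} (\<lambda>\<theta>. wf \<sigma> \<theta> ^ L * p \<theta>) = A L + integral {\<delta>..pi} (\<lambda>\<theta>. wf \<sigma> \<theta> ^ L * p \<theta>)"
      unfolding A_def using \<delta> \<delta>pi by (intro int_split pwc) auto
    have Jf: "integral {0..pi} f = integral {0..\<delta>} f + integral {\<delta>..pi} f"
      using \<delta> \<delta>pi by (intro int_split fc) auto
    have Ja: "integral {0..pi} (\<lambda>\<theta>. \<bar>wf \<sigma> \<theta>\<bar> ^ L * p \<theta>) = A L + integral {\<delta>..pi} (\<lambda>\<theta>. \<bar>wf \<sigma> \<theta>\<bar> ^ L * p \<theta>)"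
    proof -
      have "integral {0..pi} (\<lambda>\<theta>. \<bar>wf \<sigma> \<theta>\<bar> ^ L * p \<theta>) = integral {0..\<delta>} (\<lambda>\<theta>. \<bar>wf \<sigma> \<theta>\<bar> ^ L * p \<theta>) + integral {\<delta>..pi} (\<lambda>\<theta>. \<bar>wf \<sigma> \<theta>\<bar> ^ L * p \<theta>)"
        using \<delta> \<delta>pi by (intro int_split awc) auto
      moreover have "integral {0..\<delta>} (\<lambda>\<theta>. \<bar>wf \<sigma> \<theta>\<bar> ^ L * p \<theta>) = A L" unfolding A_def
      proof (rule Henstock_Kurzweil_Integration.integral_cong)
        fix \<theta> assume "\<theta> \<in> {0..\<delta>}"
        then have "wf \<sigma> \<theta> \<ge> 0" using F4 Mpos by (smt (verit))
        then show "\<bar>wf \<sigma> \<theta>\<bar> ^ L * p \<theta> = wf \<sigma> \<theta> ^ L * p \<theta>" by simp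
      qed
      ultimately show ?thesis by simp
    qed
    have lin: "integral {0..pi} (\<lambda>\<theta>. wf \<sigma> \<theta> ^ L * (p \<theta> * g \<theta>)) - g 0 * integral {0..pi} (\<lambda>\<theta>. wf \<sigma> \<theta> ^ L * p \<theta>)
        = integral {0..pi} f"
    proof -
      have i1: "(\<lambda>\<theta>. wf \<sigma> \<theta> ^ L * (p \<theta> * g \<theta>)) integrable_on {0..pi}"
        using pc gc by (intro integrable_continuous_interval continuous_intros wc)
      have i2: "(\<lambda>\<theta>. g 0 * (wf \<sigma> \<theta> ^ L * p \<theta>)) integrable_on {0..pi}"
        using pc by (intro integrable_continuous_interval continuous_intros wc)
      have "integral {0..pi} f = integral {0..pi} (\<lambda>\<theta>. wf \<sigma> \<theta> ^ L * (p \<theta> * g \<theta>) - g 0 * (wf \<sigma> \<theta> ^ L * p \<theta>))"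
        unfolding f_def by (simp add: algebra_simps)
      also have "\<dots> = integral {0..pi} (\<lambda>\<theta>. wf \<sigma> \<theta> ^ L * (p \<theta> * g \<theta>)) - g 0 * integral {0..pi} (\<lambda>\<theta>. wf \<sigma> \<theta> ^ L * p \<theta>)"
        by (subst integral_diff[OF i1 i2]) simp
      finally show ?thesis by simp
    qed
    have "min (\<epsilon> / 4) (1 / 2) * A L \<le> \<epsilon> / 4 * A L" using Apos by (intro mult_right_mono) auto
    moreover have "min (\<epsilon> / 4) (1 / 2) * A L \<le> 1 / 2 * A L" using Apos by (intro mult_right_mono) auto
    ultimately have m1: "K0 * M ^ L \<le> \<epsilon> / 4 * A L" "K0 * M ^ L \<le> 1 / 2 * A L"
      using key by linarith+
    have J1: "integral {0..pi} (\<lambda>\<theta>. wf \<sigma> \<theta> ^ L * p \<theta>) \<ge> A L / 2" using Jp tp m1 by linarith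
    show ?case
    proof (intro conjI)
      show "integral {0..pi} (\<lambda>\<theta>. wf \<sigma> \<theta> ^ L * p \<theta>) > 0" using J1 Apos by linarith
      have "\<bar>integral {0..pi} f\<bar> \<le> \<epsilon> / 2 * A L" using Jf hf tf m1 by linarith
      also have "\<dots> = \<epsilon> * (A L / 2)" by simp
      also have "\<dots> \<le> \<epsilon> * integral {0..pi} (\<lambda>\<theta>. wf \<sigma> \<theta> ^ L * p \<theta>)" using J1 \<epsilon>
        by (intro mult_left_mono) auto
      finally show "\<bar>integral {0..pi} (\<lambda>\<theta>. wf \<sigma> \<theta> ^ L * (p \<theta> * g \<theta>)) - g 0 * integral {0..pi} (\<lambda>\<theta>. wf \<sigma> \<theta> ^ L * p \<theta>)\<bar>
         \<le> \<epsilon> * integral {0..pi} (\<lambda>\<theta>. wf \<sigma> \<theta> ^ L * p \<theta>)" unfolding lin .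
      show "integral {0..pi} (\<lambda>\<theta>. \<bar>wf \<sigma> \<theta>\<bar> ^ L * p \<theta>) \<le> 3 * integral {0..pi} (\<lambda>\<theta>. wf \<sigma> \<theta> ^ L * p \<theta>)"
        using Ja tap m1 J1 by linarith
    qed
  qed
qed



definition IJ :: "real \<Rightarrow> nat \<Rightarrow> (real \<Rightarrow> real) \<Rightarrow> real" where
  "IJ \<sigma> L h = integral {0..pi} (\<lambda>\<theta>. wf \<sigma> \<theta> ^ L * h \<theta>)"

locale concset =
  fixes \<sigma> :: real and p :: "real \<Rightarrow> real"
  assumes \<sigma>: "\<sigma> > 0"
    and pc: "continuous_on {0..pi} p"
    and p0: "\<And>\<theta>. \<theta> \<in> {0..pi} \<Longrightarrow> p \<theta> \<ge> 0"
    and ppos: "\<And>\<theta>. \<theta> \<in> {0<..<pi} \<Longrightarrow> p \<theta> > 0"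
begin

lemma C1: "eventually (\<lambda>L. IJ \<sigma> L p > 0) sequentially"
proof -
  have "eventually (\<lambda>L. integral {0..pi} (\<lambda>\<theta>. wf \<sigma> \<theta> ^ L * p \<theta>) > 0 \<and>
      \<bar>integral {0..pi} (\<lambda>\<theta>. wf \<sigma> \<theta> ^ L * (p \<theta> * (\<lambda>_. 1) \<theta>)) - (\<lambda>_. 1) 0 * integral {0..pi} (\<lambda>\<theta>. wf \<sigma> \<theta> ^ L * p \<theta>)\<bar>
         \<le> 1 * integral {0..pi} (\<lambda>\<theta>. wf \<sigma> \<theta> ^ L * p \<theta>) \<and>
      integral {0..pi} (\<lambda>\<theta>. \<bar>wf \<sigma> \<theta>\<bar> ^ L * p \<theta>) \<le> 3 * integral {0..pi} (\<lambda>\<theta>. wf \<sigma> \<theta> ^ L * p \<theta>)) sequentially"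
    by (rule conc[OF \<sigma> pc continuous_on_const]) (use p0 ppos in auto)
  then show ?thesis unfolding IJ_def by (rule eventually_mono) auto
qed

lemma C2:
  assumes gc: "continuous_on {0..pi} g"
  shows "(\<lambda>L. IJ \<sigma> L (\<lambda>\<theta>. p \<theta> * g \<theta>) / IJ \<sigma> L p) \<longlonglongrightarrow> g 0"
proof (rule tendstoI)
  fix e :: real assume e: "e > 0"
  have "eventually (\<lambda>L. IJ \<sigma> L p > 0 \<and>
      \<bar>IJ \<sigma> L (\<lambda>\<theta>. p \<theta> * g \<theta>) - g 0 * IJ \<sigma> L p\<bar> \<le> e / 2 * IJ \<sigma> L p) sequentially"
  proof -
    have "eventually (\<lambda>L. integral {0..pi} (\<lambda>\<theta>. wf \<sigma> \<theta> ^ L * p \<theta>) > 0 \<and>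
      \<bar>integral {0..pi} (\<lambda>\<theta>. wf \<sigma> \<theta> ^ L * (p \<theta> * g \<theta>)) - g 0 * integral {0..pi} (\<lambda>\<theta>. wf \<sigma> \<theta> ^ L * p \<theta>)\<bar>
         \<le> e / 2 * integral {0..pi} (\<lambda>\<theta>. wf \<sigma> \<theta> ^ L * p \<theta>) \<and>
      integral {0..pi} (\<lambda>\<theta>. \<bar>wf \<sigma> \<theta>\<bar> ^ L * p \<theta>) \<le> 3 * integral {0..pi} (\<lambda>\<theta>. wf \<sigma> \<theta> ^ L * p \<theta>)) sequentially"
      by (rule conc[OF \<sigma> pc gc]) (use p0 ppos e in auto)
    then show ?thesis unfolding IJ_def by (rule eventually_mono) auto
  qed
  then show "eventually (\<lambda>L. dist (IJ \<sigma> L (\<lambda>\<theta>. p \<theta> * g \<theta>) / IJ \<sigma> L p) (g 0) < e) sequentially"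
  proof (rule eventually_mono)
    fix L assume L: "IJ \<sigma> L p > 0 \<and> \<bar>IJ \<sigma> L (\<lambda>\<theta>. p \<theta> * g \<theta>) - g 0 * IJ \<sigma> L p\<bar> \<le> e / 2 * IJ \<sigma> L p"
    then have pos: "IJ \<sigma> L p > 0" by simp
    have "IJ \<sigma> L (\<lambda>\<theta>. p \<theta> * g \<theta>) / IJ \<sigma> L p - g 0 = (IJ \<sigma> L (\<lambda>\<theta>. p \<theta> * g \<theta>) - g 0 * IJ \<sigma> L p) / IJ \<sigma> L p"
      using pos by (simp add: field_simps)
    then have "\<bar>IJ \<sigma> L (\<lambda>\<theta>. p \<theta> * g \<theta>) / IJ \<sigma> L p - g 0\<bar> = \<bar>IJ \<sigma> L (\<lambda>\<theta>. p \<theta> * g \<theta>) - g 0 * IJ \<sigma> L p\<bar> / IJ \<sigma> L p"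
      using pos by simp
    also have "\<dots> \<le> e / 2" using L pos by (simp add: divide_le_eq)
    also have "\<dots> < e" using e by simp
    finally show "dist (IJ \<sigma> L (\<lambda>\<theta>. p \<theta> * g \<theta>) / IJ \<sigma> L p) (g 0) < e" by (simp add: dist_real_def)
  qed
qed

lemma C3: "eventually (\<lambda>L. IJ \<sigma> L p > 0 \<and> integral {0..pi} (\<lambda>\<theta>. \<bar>wf \<sigma> \<theta>\<bar> ^ L * p \<theta>) \<le> 3 * IJ \<sigma> L p) sequentially"
proof -
  have "eventually (\<lambda>L. integral {0..pi} (\<lambda>\<theta>. wf \<sigma> \<theta> ^ L * p \<theta>) > 0 \<and>
      \<bar>integral {0..pi} (\<lambda>\<theta>. wf \<sigma> \<theta> ^ L * (p \<theta> * (\<lambda>_. 1) \<theta>)) - (\<lambda>_. 1) 0 * integral {0..pi} (\<lambda>\<theta>. wf \<sigma> \<theta> ^ L * p \<theta>)\<bar>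
         \<le> 1 * integral {0..pi} (\<lambda>\<theta>. wf \<sigma> \<theta> ^ L * p \<theta>) \<and>
      integral {0..pi} (\<lambda>\<theta>. \<bar>wf \<sigma> \<theta>\<bar> ^ L * p \<theta>) \<le> 3 * integral {0..pi} (\<lambda>\<theta>. wf \<sigma> \<theta> ^ L * p \<theta>)) sequentially"
    by (rule conc[OF \<sigma> pc continuous_on_const]) (use p0 ppos in auto)
  then show ?thesis unfolding IJ_def by (rule eventually_mono) auto
qed

lemma Cbound:
  assumes gc: "continuous_on {0..pi} g" and gb: "\<And>\<theta>. \<theta> \<in> {0..pi} \<Longrightarrow> \<bar>g \<theta>\<bar> \<le> K"
    and L: "IJ \<sigma> L p > 0 \<and> integral {0..pi} (\<lambda>\<theta>. \<bar>wf \<sigma> \<theta>\<bar> ^ L * p \<theta>) \<le> 3 * IJ \<sigma> L p"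
  shows "\<bar>IJ \<sigma> L (\<lambda>\<theta>. p \<theta> * g \<theta>) / IJ \<sigma> L p\<bar> \<le> 3 * K"
proof -
  have K0: "K \<ge> 0" using gb[of 0] by auto
  have "norm (IJ \<sigma> L (\<lambda>\<theta>. p \<theta> * g \<theta>)) \<le> integral {0..pi} (\<lambda>\<theta>. K * (\<bar>wf \<sigma> \<theta>\<bar> ^ L * p \<theta>))"
    unfolding IJ_def
  proof (rule integral_norm_bound_integral)
    show "(\<lambda>\<theta>. wf \<sigma> \<theta> ^ L * (p \<theta> * g \<theta>)) integrable_on {0..pi}"
      using pc gc by (intro integrable_continuous_interval continuous_intros wf_cont)
    show "(\<lambda>\<theta>. K * (\<bar>wf \<sigma> \<theta>\<bar> ^ L * p \<theta>)) integrable_on {0..pi}"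
      using pc by (intro integrable_continuous_interval continuous_intros wf_cont)
    fix \<theta> assume th: "\<theta> \<in> {0..pi}"
    have "norm (wf \<sigma> \<theta> ^ L * (p \<theta> * g \<theta>)) = \<bar>wf \<sigma> \<theta>\<bar> ^ L * p \<theta> * \<bar>g \<theta>\<bar>"
      using p0[OF th] by (simp add: abs_mult power_abs)
    also have "\<dots> \<le> \<bar>wf \<sigma> \<theta>\<bar> ^ L * p \<theta> * K" using gb[OF th] p0[OF th] by (intro mult_left_mono) auto
    finally show "norm (wf \<sigma> \<theta> ^ L * (p \<theta> * g \<theta>)) \<le> K * (\<bar>wf \<sigma> \<theta>\<bar> ^ L * p \<theta>)" by (simp add: mult.commute)
  qed
  also have "\<dots> = K * integral {0..pi} (\<lambda>\<theta>. \<bar>wf \<sigma> \<theta>\<bar> ^ L * p \<theta>)" by simp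
  also have "\<dots> \<le> K * (3 * IJ \<sigma> L p)" using L K0 by (intro mult_left_mono) auto
  finally have "\<bar>IJ \<sigma> L (\<lambda>\<theta>. p \<theta> * g \<theta>)\<bar> \<le> 3 * K * IJ \<sigma> L p" by simp
  then show ?thesis using L by (simp add: divide_le_eq abs_divide)
qed

lemma Cratio: "(\<lambda>L. IJ \<sigma> (Suc L) p / IJ \<sigma> L p) \<longlonglongrightarrow> \<sigma> + 2"
proof -
  have "IJ \<sigma> (Suc L) p = IJ \<sigma> L (\<lambda>\<theta>. p \<theta> * wf \<sigma> \<theta>)" for L
    unfolding IJ_def by (simp add: algebra_simps)
  moreover have "(\<lambda>L. IJ \<sigma> L (\<lambda>\<theta>. p \<theta> * wf \<sigma> \<theta>) / IJ \<sigma> L p) \<longlonglongrightarrow> wf \<sigma> 0"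
    by (rule C2) (rule wf_cont)
  ultimately show ?thesis by (simp add: wf_def)
qed

end

lemma tannery_nat:
  fixes a :: "nat \<Rightarrow> nat \<Rightarrow> real"
  assumes lim: "\<And>k. (\<lambda>L. a k L) \<longlonglongrightarrow> b k"
    and bd: "eventually (\<lambda>L. \<forall>k. \<bar>a k L\<bar> \<le> M k) sequentially"
    and sM: "summable M"
  shows "(\<lambda>L. \<Sum>k. a k L) \<longlonglongrightarrow> (\<Sum>k. b k)"
proof -
  have "eventually (\<lambda>(k, L). norm (a k L) \<le> M k) (at_top \<times>\<^sub>F sequentially)"
    unfolding eventually_prod_filter
    by (rule exI[of _ "\<lambda>_. True"], rule exI[of _ "\<lambda>L. \<forall>k. \<bar>a k L\<bar> \<le> M k"]) (use bd in auto)
  from tannerys_theorem[OF lim this sM] show ?thesis by simp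
qed

lemma Zlim_gen:
  fixes W :: "nat \<Rightarrow> nat \<Rightarrow> real" and c :: "nat \<Rightarrow> real"
  assumes lim: "\<And>n. (\<lambda>L. W L n / c L) \<longlonglongrightarrow> \<kappa> * (real n + 1)"
    and bd: "eventually (\<lambda>L. \<forall>n. \<bar>W L n / c L\<bar> \<le> C * (real n + 1)) sequentially"
    and a: "0 < a" "a < 1"
    and summ: "\<And>L. summable (\<lambda>n. a ^ n * W L n)"
  shows "(\<lambda>L. (\<Sum>n. a ^ n * W L n) / c L) \<longlonglongrightarrow> \<kappa> * Hr a 1"
proof -
  have s1: "(\<lambda>k. a ^ k * hr 1 k) sums Hr a 1" using H_sums[of a 1] a by simp
  have sM: "summable (\<lambda>k. a ^ k * (C * (real k + 1)))"
  proof -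
    have "summable (\<lambda>k. C * (a ^ k * hr 1 k))" using s1 by (intro summable_mult) (auto simp: sums_iff)
    then show ?thesis by (simp add: hr_def algebra_simps)
  qed
  have "(\<lambda>L. \<Sum>k. a ^ k * (W L k / c L)) \<longlonglongrightarrow> (\<Sum>k. a ^ k * (\<kappa> * (real k + 1)))"
  proof (rule tannery_nat)
    show "(\<lambda>L. a ^ k * (W L k / c L)) \<longlonglongrightarrow> a ^ k * (\<kappa> * (real k + 1))" for k
      by (intro tendsto_mult tendsto_const lim)
    show "eventually (\<lambda>L. \<forall>k. \<bar>a ^ k * (W L k / c L)\<bar> \<le> a ^ k * (C * (real k + 1))) sequentially"
      using bd
    proof (rule eventually_mono)
      fix L assume H: "\<forall>n. \<bar>W L n / c L\<bar> \<le> C * (real n + 1)"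
      show "\<forall>k. \<bar>a ^ k * (W L k / c L)\<bar> \<le> a ^ k * (C * (real k + 1))"
      proof
        fix k
        have "\<bar>a ^ k * (W L k / c L)\<bar> = a ^ k * \<bar>W L k / c L\<bar>" using a by (simp add: abs_mult)
        also have "\<dots> \<le> a ^ k * (C * (real k + 1))" using H a by (intro mult_left_mono) auto
        finally show "\<bar>a ^ k * (W L k / c L)\<bar> \<le> a ^ k * (C * (real k + 1))" .
      qed
    qed
  qed (rule sM)
  moreover have "(\<Sum>k. a ^ k * (W L k / c L)) = (\<Sum>n. a ^ n * W L n) / c L" for L
    using suminf_divide[OF summ[of L], of "c L"] by simp
  moreover have "(\<Sum>k. a ^ k * (\<kappa> * (real k + 1))) = \<kappa> * Hr a 1"
  proof -
    have "(\<lambda>k. \<kappa> * (a ^ k * hr 1 k)) sums (\<kappa> * Hr a 1)" by (intro sums_mult s1)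
    then show ?thesis by (simp add: hr_def sums_iff algebra_simps)
  qed
  ultimately show ?thesis by simp
qed



lemma Wb_le:
  assumes "\<sigma> \<ge> 0" "\<And>n. 0 \<le> b n" "\<And>n. b n \<le> 1"
  shows "Wb \<sigma> b L n \<le> (\<sigma> + 2) ^ L"
proof (induction L arbitrary: n)
  case 0 then show ?case using assms by simp
next
  case (Suc L)
  have "\<sigma> * Wb \<sigma> b L n \<le> \<sigma> * (\<sigma> + 2) ^ L" using Suc assms by (intro mult_left_mono) auto
  moreover have "(if n = 0 then 0 else Wb \<sigma> b L (n - 1)) \<le> (\<sigma> + 2) ^ L"
    using Suc assms by (auto intro: order.trans[OF _ zero_le_power])
  ultimately show ?case using Suc.IH[of "Suc n"] by (simp add: algebra_simps)
qed

lemma W_series: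
  assumes "\<sigma> \<ge> 0" "0 \<le> r" "r < 1"
  shows "Wb \<sigma> (\<lambda>n. r ^ n) L n = (\<Sum>m. r ^ m * Wb \<sigma> (\<lambda>k. if k = m then 1 else 0) L n)"
proof -
  let ?T = "\<lambda>L n m. Wb \<sigma> (\<lambda>k. if k = m then 1 else 0) L n"
  have Tb: "0 \<le> ?T L n m \<and> ?T L n m \<le> (\<sigma> + 2) ^ L" for L n m
    using assms by (intro conjI Wb_nonneg Wb_le) auto
  have summ: "summable (\<lambda>m. r ^ m * ?T L n m)" for L n
  proof (rule summable_comparison_test')
    show "summable (\<lambda>m. (\<sigma> + 2) ^ L * r ^ m)" using assms by (intro summable_mult summable_geometric) auto
    fix m
    show "norm (r ^ m * ?T L n m) \<le> (\<sigma> + 2) ^ L * r ^ m"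
    proof -
      have a: "0 \<le> ?T L n m" "?T L n m \<le> (\<sigma> + 2) ^ L" using Tb by auto
      then have "norm (r ^ m * ?T L n m) = r ^ m * ?T L n m" using assms by simp
      also have "\<dots> \<le> r ^ m * (\<sigma> + 2) ^ L" using a assms by (intro mult_left_mono) auto
      finally show ?thesis by (simp add: mult.commute)
    qed
  qed
  show ?thesis
  proof (induction L arbitrary: n)
    case 0
    have "(\<lambda>m. r ^ m * ?T 0 n m) = (\<lambda>m. if m = n then r ^ m else 0)" by (auto simp: fun_eq_iff)
    then have "(\<lambda>m. r ^ m * ?T 0 n m) sums r ^ n" using sums_single[of n "\<lambda>m. r ^ m"] by simp
    then show ?case by (simp add: sums_iff)
  next
    case (Suc L)
    have s: "(\<lambda>m. r ^ m * ?T L k m) sums Wb \<sigma> (\<lambda>n. r ^ n) L k" for k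
      using summ[of L k] Suc.IH[of k] by (simp add: summable_sums)
    have "(\<lambda>m. \<sigma> * (r ^ m * ?T L n m) + r ^ m * ?T L (Suc n) m + (if n = 0 then 0 else r ^ m * ?T L (n - 1) m))
      sums (\<sigma> * Wb \<sigma> (\<lambda>n. r ^ n) L n + Wb \<sigma> (\<lambda>n. r ^ n) L (Suc n) + (if n = 0 then 0 else Wb \<sigma> (\<lambda>n. r ^ n) L (n - 1)))"
    proof (cases "n = 0")
      case True
      have "(\<lambda>m. \<sigma> * (r ^ m * ?T L n m) + r ^ m * ?T L (Suc n) m + 0) sums
        (\<sigma> * Wb \<sigma> (\<lambda>n. r ^ n) L n + Wb \<sigma> (\<lambda>n. r ^ n) L (Suc n) + 0)"
        by (intro sums_add sums_mult s sums_zero)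
      then show ?thesis using True by simp
    next
      case False
      have "(\<lambda>m. \<sigma> * (r ^ m * ?T L n m) + r ^ m * ?T L (Suc n) m + r ^ m * ?T L (n - 1) m) sums
        (\<sigma> * Wb \<sigma> (\<lambda>n. r ^ n) L n + Wb \<sigma> (\<lambda>n. r ^ n) L (Suc n) + Wb \<sigma> (\<lambda>n. r ^ n) L (n - 1))"
        by (intro sums_add sums_mult s)
      then show ?thesis using False by simp
    qed
    moreover have "(\<lambda>m. \<sigma> * (r ^ m * ?T L n m) + r ^ m * ?T L (Suc n) m + (if n = 0 then 0 else r ^ m * ?T L (n - 1) m))
       = (\<lambda>m. r ^ m * ?T (Suc L) n m)"
      by (auto simp: fun_eq_iff algebra_simps)
    ultimately show ?case by (simp add: sums_iff)
  qed
qed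

lemma cos_gt_m1: "\<theta> \<in> {0<..<pi} \<Longrightarrow> 1 + cos \<theta> > 0"
  using cos_monotone_0_pi[of \<theta> pi] by auto

lemma cs_eq1: "\<sigma> > 0 \<Longrightarrow> concset \<sigma> (\<lambda>\<theta>. 1 + cos \<theta>)"
proof (unfold_locales)
  show "continuous_on {0..pi} (\<lambda>\<theta>. 1 + cos \<theta>)" by (intro continuous_intros)
  show "0 \<le> 1 + cos \<theta>" for \<theta> :: real using cos_ge_minus_one[of \<theta>] by linarith
  show "\<theta> \<in> {0<..<pi} \<Longrightarrow> 0 < 1 + cos \<theta>" for \<theta> by (rule cos_gt_m1)
qed

lemma cs_lt1: "\<sigma> > 0 \<Longrightarrow> concset \<sigma> (\<lambda>\<theta>. sin \<theta> ^ 2)"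
proof (unfold_locales)
  show "continuous_on {0..pi} (\<lambda>\<theta>. sin \<theta> ^ 2)" by (intro continuous_intros)
  show "0 \<le> sin \<theta> ^ 2" for \<theta> :: real by simp
  show "\<theta> \<in> {0<..<pi} \<Longrightarrow> 0 < sin \<theta> ^ 2" for \<theta> using sin_gt_zero[of \<theta>] by simp
qed



lemma case_eq1:
  fixes \<sigma> \<rho>0 \<rho>1 :: real
  assumes "\<sigma> > 0" and "0 < \<rho>0" and "\<rho>0 < 1" and r1: "\<rho>1 = 1"
  shows "\<forall>(K::nat) (ns::nat \<Rightarrow> nat).
    (\<lambda>L. PrL \<sigma> (\<lambda>n. \<rho>0 ^ n) (\<lambda>n. \<rho>1 ^ n) L {g. \<forall>k\<le>K. gam g k = ns k})
    \<longlonglongrightarrow>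
    sum_geom_law (\<rho>0 * max 1 \<rho>1) (\<rho>0 / max 1 \<rho>1) (ns 0) *
      (\<Prod>i<K. Qker \<sigma> (max 1 \<rho>1) (ns i) (ns (Suc i)))"
proof -
  define p where "p = (\<lambda>\<theta>::real. 1 + cos \<theta>)"
  have cs: "concset \<sigma> p" unfolding p_def by (rule cs_eq1[OF assms(1)])
  define c where "c = (\<lambda>L. IJ \<sigma> L p)"
  have one: "(\<lambda>n. (1::real) ^ n) = (\<lambda>n. 1)" by simp
  have Wr: "Wb \<sigma> (\<lambda>n. \<rho>1 ^ n) L n = 1 / pi * IJ \<sigma> L (\<lambda>\<theta>. p \<theta> * u n \<theta>)" for L n
    unfolding r1 one W1_repr IJ_def p_def by simp
  have mx: "max 1 \<rho>1 = 1" using r1 by simp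
  have Wq: "Wb \<sigma> (\<lambda>n. \<rho>1 ^ n) L n / c L = 1 / pi * (IJ \<sigma> L (\<lambda>\<theta>. p \<theta> * u n \<theta>) / IJ \<sigma> L p)" for L n
    unfolding Wr c_def by simp
  have Wlim: "(\<lambda>L. Wb \<sigma> (\<lambda>n. \<rho>1 ^ n) L n / c L) \<longlonglongrightarrow> 1 / pi * (real n + 1)" for n
    unfolding Wq using concset.C2[OF cs u_cont[of "{0..pi}" n]] by (intro tendsto_mult tendsto_const) (simp add: u_zero)
  have bd: "eventually (\<lambda>L. \<forall>n. \<bar>Wb \<sigma> (\<lambda>n. \<rho>1 ^ n) L n / c L\<bar> \<le> 3 / pi * (real n + 1)) sequentially"
    using concset.C3[OF cs]
  proof (rule eventually_mono)
    fix L assume L: "IJ \<sigma> L p > 0 \<and> integral {0..pi} (\<lambda>\<theta>. \<bar>wf \<sigma> \<theta>\<bar> ^ L * p \<theta>) \<le> 3 * IJ \<sigma> L p"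
    show "\<forall>n. \<bar>Wb \<sigma> (\<lambda>n. \<rho>1 ^ n) L n / c L\<bar> \<le> 3 / pi * (real n + 1)"
    proof
      fix n
      have "\<bar>IJ \<sigma> L (\<lambda>\<theta>. p \<theta> * u n \<theta>) / IJ \<sigma> L p\<bar> \<le> 3 * (real n + 1)"
        by (rule concset.Cbound[OF cs u_cont _ L]) (rule u_bound)
      then have "1 / pi * \<bar>IJ \<sigma> L (\<lambda>\<theta>. p \<theta> * u n \<theta>) / IJ \<sigma> L p\<bar> \<le> 1 / pi * (3 * (real n + 1))"
        by (intro mult_left_mono) auto
      moreover have "\<bar>Wb \<sigma> (\<lambda>n. \<rho>1 ^ n) L n / c L\<bar> = 1 / pi * \<bar>IJ \<sigma> L (\<lambda>\<theta>. p \<theta> * u n \<theta>) / IJ \<sigma> L p\<bar>"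
        unfolding Wq by (simp add: abs_mult)
      ultimately show "\<bar>Wb \<sigma> (\<lambda>n. \<rho>1 ^ n) L n / c L\<bar> \<le> 3 / pi * (real n + 1)" by simp
    qed
  qed
  have summ: "summable (\<lambda>n. \<rho>0 ^ n * Wb \<sigma> (\<lambda>n. \<rho>1 ^ n) L n)" for L
    using assms by (intro W_summable) (auto simp: max_def)
  show ?thesis
  proof (rule main_reduction[where c = c and \<kappa> = "1 / pi"])
    show "eventually (\<lambda>L. c L > 0) sequentially" unfolding c_def by (rule concset.C1[OF cs])
    show "(\<lambda>L. Wb \<sigma> (\<lambda>n. \<rho>1 ^ n) L n / c L) \<longlonglongrightarrow> 1 / pi * hr (max 1 \<rho>1) n" for n
      using Wlim[of n] unfolding mx hr_def by simp
    show "(\<lambda>L. c (Suc L) / c L) \<longlonglongrightarrow> max 1 \<rho>1 + 1 / max 1 \<rho>1 + \<sigma>"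
      unfolding mx c_def using concset.Cratio[OF cs] by (simp add: add.commute)
    show "(\<lambda>L. (\<Sum>n. \<rho>0 ^ n * Wb \<sigma> (\<lambda>n. \<rho>1 ^ n) L n) / c L) \<longlonglongrightarrow> 1 / pi * Hr \<rho>0 (max 1 \<rho>1)"
      unfolding mx by (rule Zlim_gen[OF Wlim bd assms(2,3) summ])
  qed (use assms summ in auto)
qed



lemma case_lt1:
  fixes \<sigma> \<rho>0 \<rho>1 :: real
  assumes "\<sigma> > 0" and "0 < \<rho>0" and "\<rho>0 < 1" and r0: "\<rho>1 > 0" and r1: "\<rho>1 < 1"
  shows "\<forall>(K::nat) (ns::nat \<Rightarrow> nat).
    (\<lambda>L. PrL \<sigma> (\<lambda>n. \<rho>0 ^ n) (\<lambda>n. \<rho>1 ^ n) L {g. \<forall>k\<le>K. gam g k = ns k})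
    \<longlonglongrightarrow>
    sum_geom_law (\<rho>0 * max 1 \<rho>1) (\<rho>0 / max 1 \<rho>1) (ns 0) *
      (\<Prod>i<K. Qker \<sigma> (max 1 \<rho>1) (ns i) (ns (Suc i)))"
proof -
  define p where "p = (\<lambda>\<theta>::real. sin \<theta> ^ 2)"
  have cs: "concset \<sigma> p" unfolding p_def by (rule cs_lt1[OF assms(1)])
  define c where "c = (\<lambda>L. IJ \<sigma> L p)"
  define T where "T = (\<lambda>L n m. Wb \<sigma> (\<lambda>k. if k = m then 1 else 0) L n)"
  define H1 where "H1 = Hr \<rho>1 1"
  have H1s: "(\<lambda>k. \<rho>1 ^ k * (real k + 1)) sums H1"
    using H_sums[of \<rho>1 1] assms unfolding H1_def hr_def by simp
  have H1p: "H1 > 0" unfolding H1_def using Hr_pos[of \<rho>1 1] assms by simp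
  have mx: "max 1 \<rho>1 = 1" using r1 by simp
  have gc: "continuous_on {0..pi} (\<lambda>\<theta>. u n \<theta> * u m \<theta>)" for n m by (intro continuous_intros u_cont)
  have gb: "\<bar>u n \<theta> * u m \<theta>\<bar> \<le> (real n + 1) * (real m + 1)" for n m \<theta>
    unfolding abs_mult by (intro mult_mono u_bound) auto
  have Tq: "T L n m / c L = 2 / pi * (IJ \<sigma> L (\<lambda>\<theta>. p \<theta> * (u n \<theta> * u m \<theta>)) / IJ \<sigma> L p)" for L n m
  proof -
    have "T L n m = 2 / pi * IJ \<sigma> L (\<lambda>\<theta>. p \<theta> * (u n \<theta> * u m \<theta>))"
      unfolding T_def t_repr IJ_def p_def by (simp add: mult.assoc)
    then show ?thesis unfolding c_def by simp
  qed
  have Tlim: "(\<lambda>L. T L n m / c L) \<longlonglongrightarrow> 2 / pi * ((real n + 1) * (real m + 1))" for n m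
    unfolding Tq using concset.C2[OF cs gc[of n m]] by (intro tendsto_mult tendsto_const) (simp add: u_zero)
  have Tbd: "\<bar>T L n m / c L\<bar> \<le> 6 / pi * ((real n + 1) * (real m + 1))"
    if L: "IJ \<sigma> L p > 0 \<and> integral {0..pi} (\<lambda>\<theta>. \<bar>wf \<sigma> \<theta>\<bar> ^ L * p \<theta>) \<le> 3 * IJ \<sigma> L p" for L n m
  proof -
    have "\<bar>IJ \<sigma> L (\<lambda>\<theta>. p \<theta> * (u n \<theta> * u m \<theta>)) / IJ \<sigma> L p\<bar> \<le> 3 * ((real n + 1) * (real m + 1))"
      by (rule concset.Cbound[OF cs gc _ L]) (rule gb)
    then have "2 / pi * \<bar>IJ \<sigma> L (\<lambda>\<theta>. p \<theta> * (u n \<theta> * u m \<theta>)) / IJ \<sigma> L p\<bar> \<le> 2 / pi * (3 * ((real n + 1) * (real m + 1)))"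
      by (intro mult_left_mono) auto
    moreover have "\<bar>T L n m / c L\<bar> = 2 / pi * \<bar>IJ \<sigma> L (\<lambda>\<theta>. p \<theta> * (u n \<theta> * u m \<theta>)) / IJ \<sigma> L p\<bar>"
      unfolding Tq by (simp add: abs_mult)
    ultimately show ?thesis by simp
  qed
  have Ws: "Wb \<sigma> (\<lambda>n. \<rho>1 ^ n) L n / c L = (\<Sum>m. \<rho>1 ^ m * (T L n m / c L))" for L n
  proof -
    have s: "summable (\<lambda>m. \<rho>1 ^ m * T L n m)"
    proof (rule summable_comparison_test')
      show "summable (\<lambda>m. (\<sigma> + 2) ^ L * \<rho>1 ^ m)" using assms by (intro summable_mult summable_geometric) auto
      fix m
      have a: "0 \<le> T L n m" "T L n m \<le> (\<sigma> + 2) ^ L" unfolding T_def using assms by (intro Wb_nonneg Wb_le; auto)+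
      then have "norm (\<rho>1 ^ m * T L n m) = \<rho>1 ^ m * T L n m" using assms by simp
      also have "\<dots> \<le> \<rho>1 ^ m * (\<sigma> + 2) ^ L" using a assms by (intro mult_left_mono) auto
      finally show "norm (\<rho>1 ^ m * T L n m) \<le> (\<sigma> + 2) ^ L * \<rho>1 ^ m" by (simp add: mult.commute)
    qed
    have "Wb \<sigma> (\<lambda>n. \<rho>1 ^ n) L n = (\<Sum>m. \<rho>1 ^ m * T L n m)" unfolding T_def
      using assms by (intro W_series) auto
    then show ?thesis using suminf_divide[OF s, of "c L"] by simp
  qed
  have Wlim: "(\<lambda>L. Wb \<sigma> (\<lambda>n. \<rho>1 ^ n) L n / c L) \<longlonglongrightarrow> 2 / pi * H1 * (real n + 1)" for n
  proof -
    have "(\<lambda>L. \<Sum>m. \<rho>1 ^ m * (T L n m / c L)) \<longlonglongrightarrow> (\<Sum>m. \<rho>1 ^ m * (2 / pi * ((real n + 1) * (real m + 1))))"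
    proof (rule tannery_nat)
      show "(\<lambda>L. \<rho>1 ^ m * (T L n m / c L)) \<longlonglongrightarrow> \<rho>1 ^ m * (2 / pi * ((real n + 1) * (real m + 1)))" for m
        by (intro tendsto_mult tendsto_const Tlim)
      show "eventually (\<lambda>L. \<forall>m. \<bar>\<rho>1 ^ m * (T L n m / c L)\<bar> \<le> (6 / pi * (real n + 1)) * (\<rho>1 ^ m * (real m + 1))) sequentially"
        using concset.C3[OF cs]
      proof (rule eventually_mono)
        fix L assume L: "IJ \<sigma> L p > 0 \<and> integral {0..pi} (\<lambda>\<theta>. \<bar>wf \<sigma> \<theta>\<bar> ^ L * p \<theta>) \<le> 3 * IJ \<sigma> L p"
        show "\<forall>m. \<bar>\<rho>1 ^ m * (T L n m / c L)\<bar> \<le> (6 / pi * (real n + 1)) * (\<rho>1 ^ m * (real m + 1))"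
        proof
          fix m
          have "\<bar>\<rho>1 ^ m * (T L n m / c L)\<bar> = \<rho>1 ^ m * \<bar>T L n m / c L\<bar>" using assms by (simp add: abs_mult)
          also have "\<dots> \<le> \<rho>1 ^ m * (6 / pi * ((real n + 1) * (real m + 1)))"
            using Tbd[OF L] assms by (intro mult_left_mono) auto
          also have "\<dots> = (6 / pi * (real n + 1)) * (\<rho>1 ^ m * (real m + 1))" by (simp add: field_simps)
          finally show "\<bar>\<rho>1 ^ m * (T L n m / c L)\<bar> \<le> (6 / pi * (real n + 1)) * (\<rho>1 ^ m * (real m + 1))" .
        qed
      qed
      show "summable (\<lambda>m. (6 / pi * (real n + 1)) * (\<rho>1 ^ m * (real m + 1)))"
        using H1s by (intro summable_mult) (auto simp: sums_iff)
    qed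
    moreover have "(\<Sum>m. \<rho>1 ^ m * (2 / pi * ((real n + 1) * (real m + 1)))) = 2 / pi * H1 * (real n + 1)"
    proof -
      have "(\<lambda>m. (2 / pi * (real n + 1)) * (\<rho>1 ^ m * (real m + 1))) sums ((2 / pi * (real n + 1)) * H1)"
        by (intro sums_mult H1s)
      moreover have "(\<lambda>m. \<rho>1 ^ m * (2 / pi * ((real n + 1) * (real m + 1)))) = (\<lambda>m. (2 / pi * (real n + 1)) * (\<rho>1 ^ m * (real m + 1)))"
        by (rule ext) (simp only: mult_ac)
      moreover have "(2 / pi * (real n + 1)) * H1 = 2 / pi * H1 * (real n + 1)" by (simp only: mult_ac)
      ultimately show ?thesis by (simp add: sums_iff)
    qed
    ultimately show ?thesis unfolding Ws by simp
  qed
  have bd: "eventually (\<lambda>L. \<forall>n. \<bar>Wb \<sigma> (\<lambda>n. \<rho>1 ^ n) L n / c L\<bar> \<le> (6 / pi * H1) * (real n + 1)) sequentially"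
    using concset.C3[OF cs]
  proof (rule eventually_mono)
    fix L assume L: "IJ \<sigma> L p > 0 \<and> integral {0..pi} (\<lambda>\<theta>. \<bar>wf \<sigma> \<theta>\<bar> ^ L * p \<theta>) \<le> 3 * IJ \<sigma> L p"
    show "\<forall>n. \<bar>Wb \<sigma> (\<lambda>n. \<rho>1 ^ n) L n / c L\<bar> \<le> (6 / pi * H1) * (real n + 1)"
    proof
      fix n
      have b: "norm (\<rho>1 ^ m * (T L n m / c L)) \<le> (6 / pi * (real n + 1)) * (\<rho>1 ^ m * (real m + 1))" for m
      proof -
        have "\<bar>\<rho>1 ^ m * (T L n m / c L)\<bar> = \<rho>1 ^ m * \<bar>T L n m / c L\<bar>" using assms by (simp add: abs_mult)
        also have "\<dots> \<le> \<rho>1 ^ m * (6 / pi * ((real n + 1) * (real m + 1)))"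
          using Tbd[OF L] assms by (intro mult_left_mono) auto
        also have "\<dots> = (6 / pi * (real n + 1)) * (\<rho>1 ^ m * (real m + 1))" by (simp add: field_simps)
        finally show ?thesis by simp
      qed
      have "norm (\<Sum>m. \<rho>1 ^ m * (T L n m / c L)) \<le> (\<Sum>m. (6 / pi * (real n + 1)) * (\<rho>1 ^ m * (real m + 1)))"
        by (rule norm_suminf_le[OF b]) (use H1s in \<open>auto intro: summable_mult simp: sums_iff\<close>)
      also have "\<dots> = (6 / pi * (real n + 1)) * H1"
        using H1s by (subst suminf_mult) (auto simp: sums_iff)
      finally show "\<bar>Wb \<sigma> (\<lambda>n. \<rho>1 ^ n) L n / c L\<bar> \<le> (6 / pi * H1) * (real n + 1)"
        unfolding Ws by (simp add: algebra_simps)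
    qed
  qed
  have summ: "summable (\<lambda>n. \<rho>0 ^ n * Wb \<sigma> (\<lambda>n. \<rho>1 ^ n) L n)" for L
    using assms by (intro W_summable) (auto simp: max_def)
  show ?thesis
  proof (rule main_reduction[where c = c and \<kappa> = "2 / pi * H1"])
    show "eventually (\<lambda>L. c L > 0) sequentially" unfolding c_def by (rule concset.C1[OF cs])
    show "2 / pi * H1 > 0" using H1p by simp
    show "(\<lambda>L. Wb \<sigma> (\<lambda>n. \<rho>1 ^ n) L n / c L) \<longlonglongrightarrow> 2 / pi * H1 * hr (max 1 \<rho>1) n" for n
      using Wlim[of n] unfolding mx hr_def by simp
    show "(\<lambda>L. c (Suc L) / c L) \<longlonglongrightarrow> max 1 \<rho>1 + 1 / max 1 \<rho>1 + \<sigma>"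
      unfolding mx c_def using concset.Cratio[OF cs] by (simp add: add.commute)
    show "(\<lambda>L. (\<Sum>n. \<rho>0 ^ n * Wb \<sigma> (\<lambda>n. \<rho>1 ^ n) L n) / c L) \<longlonglongrightarrow> 2 / pi * H1 * Hr \<rho>0 (max 1 \<rho>1)"
      unfolding mx by (rule Zlim_gen[OF Wlim bd assms(2,3) summ])
  next
    have "\<rho>0 * \<rho>1 < 1 * 1" using assms by (intro mult_strict_mono) auto
    then show "\<rho>0 * \<rho>1 < 1" by simp
  qed (use assms summ in auto)
qed

theorem corollary1p3:
  fixes \<sigma> \<rho>0 \<rho>1 :: real
  assumes "\<sigma> > 0" and "0 < \<rho>0" and "\<rho>0 < 1" and "\<rho>1 > 0" and "\<rho>0 * \<rho>1 < 1"
  shows "\<forall>(K::nat) (ns::nat \<Rightarrow> nat).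
    (\<lambda>L. PrL \<sigma> (\<lambda>n. \<rho>0 ^ n) (\<lambda>n. \<rho>1 ^ n) L {g. \<forall>k\<le>K. gam g k = ns k})
    \<longlonglongrightarrow>
    sum_geom_law (\<rho>0 * max 1 \<rho>1) (\<rho>0 / max 1 \<rho>1) (ns 0) *
      (\<Prod>i<K. Qker \<sigma> (max 1 \<rho>1) (ns i) (ns (Suc i)))"
proof (cases "\<rho>1 > 1")
  case True then show ?thesis using case_gt assms by blast
next
  case False
  show ?thesis
  proof (cases "\<rho>1 = 1")
    case True then show ?thesis using case_eq1 assms by blast
  next
    case False2: False
    then have "\<rho>1 < 1" using False by simp
    then show ?thesis using case_lt1 assms by blast
  qed
qed


end
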